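(* Let $Q$ be a quiver of type $\mathbb{A}_n$ with an arbitrary orientation. Then, with respect to the integral volume on $\mathbb{R}^n$, $$\mathrm{vol}\,P^+(Q)=\sharp\mathcal{T}^+(Q),\qquad \mathrm{vol}\,P^{\mathrm{clus}}(Q)=\sharp\mathcal{T}^{\mathrm{clus}}(Q),\qquad \mathrm{vol}\,P(Q)=\sharp\mathcal{T}(Q).$$
   Context: Let $k$ be a field and $n\ge 1$. A quiver $Q$ of type $\mathbb{A}_n$ has vertex set $Q_0=\{1,\dots,n\}$ and exactly one arrow between $i$ and $i+1$ for each $1\le i<n$, each arrow oriented arbitrarily. Modules are finite-dimensional representations of $Q$ over $k$, considered up to isomorphism; the dimension vector of $V$ is $\underline{\dim}\,V=(\dim V_1,\dots,\dim V_n)\in\mathbb{Z}^n$, and the support of $V$ is $\{i: V_i\neq 0\}$. Up to isomorphism the indecomposable modules are in bijection with intervals $[i,j]$, $1\le i\le j\le n$, the one for $[i,j]$ having dimension vector $e_i+\dots+e_j$. For $I\subseteq Q_0$, $Q|_I$ denotes the full subquiver on $I$; its modules are identified with the modules over $Q$ with support contained in $I$. A tilting module over $Q|_I$ is a module $T$ that is a direct sum of exactly $|I|$ pairwise non-isomorphic indecomposable modules with support in $I$ and satisfies $\mathrm{Ext}^1(T,T)=0$ (for $I=\emptyset$ this is the zero module). $\mathcal{T}^+(Q)$ is the set of tilting modules over $Q$. A support tilting module is a module $T$ which is a tilting module over $Q|_{\mathrm{supp}\,T}$ (the zero module included); $\mathcal{T}^{\mathrm{clus}}(Q)$ is the set of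 these. A $2$-support tilting module is a pair $(T^+,T^-)$ such that for some $I\subseteq Q_0$, $T^+$ is a tilting module over $Q|_I$ and $T^-$ is a tilting module over $Q|_{Q_0\setminus I}$; $\mathcal{T}(Q)$ is the set of these. For a tilting module $T$ let $\sigma_T=\mathrm{conv}(\{0\}\cup\{\underline{\dim}\,X : X \text{ an indecomposable summand of } T\})$. For a support tilting module $T$ with support $I$ let $\sigma_T=\mathrm{conv}(\{0\}\cup\{\underline{\dim}\,X: X \text{ indecomposable summand of } T\}\cup\{-e_j: j\in Q_0\setminus I\})$. For a $2$-support tilting module $T=(T^+,T^-)$ let $\sigma_T=\mathrm{conv}(\{0\}\cup\{\underline{\dim}\,X: X\text{ indecomposable summand of }T^+\}\cup\{-\underline{\dim}\,Y: Y\text{ indecomposable summand of }T^-\})$. Define $P^+(Q)=\bigcup_{T\in\mathcal{T}^+(Q)}\sigma_T$, $P^{\mathrm{clus}}(Q)=\bigcup_{T\in\mathcal{T}^{\mathrm{clus}}(Q)}\sigma_T$, $P(Q)=\bigcup_{T\in\mathcal{T}(Q)}\sigma_T$, all subsets of $\mathbb{R}^n$. The integral volume $\mathrm{vol}$ on $\mathbb{R}^n$ is $n!$ times Lebesgue measure (so a simplex spanned by $0$ and a $\mathbb{Z}$-basis of $\mathbb{Z}^n$ has volume $1$). *)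

theory Defs
  imports "HOL-Analysis.Analysis"
begin

text \<open>Quiver of type A_n: vertices 1..n, for 1 <= i < n one arrow between i and i+1;
  orient i = True means the arrow is i -> i+1, otherwise i+1 -> i.\<close>

definition asrc :: "(nat \<Rightarrow> bool) \<Rightarrow> nat \<Rightarrow> nat" where
  "asrc orient i = (if orient i then i else Suc i)"

definition atgt :: "(nat \<Rightarrow> bool) \<Rightarrow> nat \<Rightarrow> nat" where
  "atgt orient i = (if orient i then Suc i else i)"

text \<open>Indecomposable modules up to isomorphism: intervals [i,j], 1 <= i <= j <= n.
  The interval module has k at vertices i..j and identity maps along arrows inside.\<close>

type_synonym interval = "nat \<times> nat"

definition intervals :: "nat \<Rightarrow> interval set" where
  "intervals n = {(i, j). 1 \<le> i \<and> i \<le> j \<and> j \<le> n}"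

definition isupp :: "interval \<Rightarrow> nat set" where
  "isupp X = {fst X..snd X}"

text \<open>Ext^1(X,Y) over the path algebra kQ is the cokernel of Ringel's map
  d : (sum over vertices v) Hom_k(X_v,Y_v) -> (sum over arrows a) Hom_k(X_(s a), Y_(t a)),
  d(f)_a = Y_a f_(s a) - f_(t a) X_a.  For interval modules all nonzero spaces are k and
  all nonzero maps are identities, so an element of the source is a function f supported
  on supp X \<inter> supp Y, the target has one copy of k for each arrow a with s a in supp X and
  t a in supp Y, and d(f)_a = f(s a) - f(t a).  Ext^1(X,Y) = 0 iff d is surjective.\<close>

definition ext1_zero :: "'k::field itself \<Rightarrow> (nat \<Rightarrow> bool) \<Rightarrow> nat \<Rightarrow> interval \<Rightarrow> interval \<Rightarrow> bool" where
  "ext1_zero k orient n X Y \<longleftrightarrow>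
     (\<forall>g :: nat \<Rightarrow> 'k. \<exists>f :: nat \<Rightarrow> 'k.
        (\<forall>v. v \<notin> {1..n} \<inter> isupp X \<inter> isupp Y \<longrightarrow> f v = 0) \<and>
        (\<forall>i\<in>{1..<n}. asrc orient i \<in> isupp X \<and> atgt orient i \<in> isupp Y \<longrightarrow>
            g i = f (asrc orient i) - f (atgt orient i)))"

text \<open>A basic module (direct sum of pairwise non-isomorphic indecomposables) is represented by
  the finite set of its indecomposable summands.  Ext^1 is additive, so Ext^1(T,T) = 0 iff
  Ext^1(X,Y) = 0 for all summands X, Y.\<close>

definition tilting_on :: "'k::field itself \<Rightarrow> (nat \<Rightarrow> bool) \<Rightarrow> nat \<Rightarrow> nat set \<Rightarrow> interval set \<Rightarrow> bool" where
  "tilting_on k orient n I T \<longleftrightarrow>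
     T \<subseteq> intervals n \<and> (\<forall>X\<in>T. isupp X \<subseteq> I) \<and> card T = card I \<and>
     (\<forall>X\<in>T. \<forall>Y\<in>T. ext1_zero k orient n X Y)"

definition msupp :: "interval set \<Rightarrow> nat set" where
  "msupp T = (\<Union>X\<in>T. isupp X)"

definition tilt_plus :: "'k::field itself \<Rightarrow> (nat \<Rightarrow> bool) \<Rightarrow> nat \<Rightarrow> interval set set" where
  "tilt_plus k orient n = {T. tilting_on k orient n {1..n} T}"

definition tilt_clus :: "'k::field itself \<Rightarrow> (nat \<Rightarrow> bool) \<Rightarrow> nat \<Rightarrow> interval set set" where
  "tilt_clus k orient n = {T. tilting_on k orient n (msupp T) T}"

definition tilt_two :: "'k::field itself \<Rightarrow> (nat \<Rightarrow> bool) \<Rightarrow> nat \<Rightarrow> (interval set \<times> interval set) set" where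
  "tilt_two k orient n = {(Tp, Tm). \<exists>I \<subseteq> {1..n}.
      tilting_on k orient n I Tp \<and> tilting_on k orient n ({1..n} - I) Tm}"

text \<open>R^n is real^'n, with vertex i identified with the coordinate e i for a bijection
  e : {1..n} -> 'n.\<close>

definition dimv :: "(nat \<Rightarrow> 'n::finite) \<Rightarrow> interval \<Rightarrow> real^'n" where
  "dimv e X = (\<Sum>i\<in>isupp X. axis (e i) 1)"

definition sigma_plus :: "(nat \<Rightarrow> 'n::finite) \<Rightarrow> interval set \<Rightarrow> (real^'n) set" where
  "sigma_plus e T = convex hull (insert 0 (dimv e ` T))"

definition sigma_clus :: "nat \<Rightarrow> (nat \<Rightarrow> 'n::finite) \<Rightarrow> interval set \<Rightarrow> (real^'n) set" where
  "sigma_clus n e T = convex hull (insert 0 (dimv e ` T \<union>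
      (\<lambda>j. - axis (e j) 1) ` ({1..n} - msupp T)))"

definition sigma_two :: "(nat \<Rightarrow> 'n::finite) \<Rightarrow> interval set \<times> interval set \<Rightarrow> (real^'n) set" where
  "sigma_two e TT = convex hull (insert 0 (dimv e ` fst TT \<union> (\<lambda>Y. - dimv e Y) ` snd TT))"

definition P_plus :: "'k::field itself \<Rightarrow> (nat \<Rightarrow> bool) \<Rightarrow> nat \<Rightarrow> (nat \<Rightarrow> 'n::finite) \<Rightarrow> (real^'n) set" where
  "P_plus k orient n e = (\<Union>T\<in>tilt_plus k orient n. sigma_plus e T)"

definition P_clus :: "'k::field itself \<Rightarrow> (nat \<Rightarrow> bool) \<Rightarrow> nat \<Rightarrow> (nat \<Rightarrow> 'n::finite) \<Rightarrow> (real^'n) set" where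
  "P_clus k orient n e = (\<Union>T\<in>tilt_clus k orient n. sigma_clus n e T)"

definition P_two :: "'k::field itself \<Rightarrow> (nat \<Rightarrow> bool) \<Rightarrow> nat \<Rightarrow> (nat \<Rightarrow> 'n::finite) \<Rightarrow> (real^'n) set" where
  "P_two k orient n e = (\<Union>T\<in>tilt_two k orient n. sigma_two e T)"

definition ivol :: "nat \<Rightarrow> (real^'n::finite) set \<Rightarrow> real" where
  "ivol n S = fact n * measure lborel S"

end

theory Submission
  imports Defs
begin


lemma det_shear_fin:
  fixes m n :: "'n::finite"
  assumes "m \<noteq> n"
  shows "det (matrix (\<lambda>v::real^'n. \<chi> i. if i = m then v $ m + v $ n else v $ i)) = 1"
proof -
  have "matrix (\<lambda>v::real^'n. \<chi> i. if i = m then v $ m + v $ n else v $ i)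
      = (\<chi> k. if k = m then row m (mat 1) + 1 *s row n (mat 1) else row k (mat 1 :: real^'n^'n))"
    by (auto simp: matrix_def vec_eq_iff row_def mat_def axis_def)
  then show ?thesis using det_row_operation[OF assms, of "mat 1 :: real^'n^'n" 1] by simp
qed

proposition
 fixes f :: "real^'n::finite \<Rightarrow> real^'n"
  assumes "linear f" "S \<in> lmeasurable"
  shows measurable_linear_image_fin: "(f ` S) \<in> lmeasurable"
    and measure_linear_image_fin: "measure lebesgue (f ` S) = \<bar>det (matrix f)\<bar> * measure lebesgue S" (is "?Q f S")
proof -
  have "\<forall>S \<in> lmeasurable. (f ` S) \<in> lmeasurable \<and> ?Q f S"
  proof (rule induct_linear_elementary [OF \<open>linear f\<close>]; intro ballI)
    fix f g and S :: "(real,'n) vec set"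
    assume "linear f" and "linear g"
      and f [rule_format]: "\<forall>S \<in> lmeasurable. f ` S \<in> lmeasurable \<and> ?Q f S"
      and g [rule_format]: "\<forall>S \<in> lmeasurable. g ` S \<in> lmeasurable \<and> ?Q g S"
      and S: "S \<in> lmeasurable"
    then have gS: "g ` S \<in> lmeasurable"
      by blast
    show "(f \<circ> g) ` S \<in> lmeasurable \<and> ?Q (f \<circ> g) S"
      using f [OF gS] g [OF S] matrix_compose [OF \<open>linear g\<close> \<open>linear f\<close>]
      by (simp add: o_def image_comp abs_mult det_mul)
  next
    fix f :: "real^'n::_ \<Rightarrow> real^'n::_" and i and S :: "(real^'n::_) set"
    assume "linear f" and 0: "\<And>x. f x $ i = 0" and "S \<in> lmeasurable"
    then have "\<not> inj f"
      by (metis (full_types) linear_injective_imp_surjective one_neq_zero surjE vec_component)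
    have detf: "det (matrix f) = 0"
      using \<open>\<not> inj f\<close> det_nz_iff_inj[OF \<open>linear f\<close>] by blast
    show "f ` S \<in> lmeasurable \<and> ?Q f S"
    proof
      show "f ` S \<in> lmeasurable"
        using lmeasurable_iff_indicator_has_integral \<open>linear f\<close> \<open>\<not> inj f\<close> negligible_UNIV negligible_linear_singular_image by blast
      have "measure lebesgue (f ` S) = 0"
        by (meson \<open>\<not> inj f\<close> \<open>linear f\<close> negligible_imp_measure0 negligible_linear_singular_image)
      also have "\<dots> = \<bar>det (matrix f)\<bar> * measure lebesgue S"
        by (simp add: detf)
      finally show "?Q f S" .
    qed
  next
    fix c and S :: "(real^'n::_) set"
    assume "S \<in> lmeasurable"
    show "(\<lambda>a. \<chi> i. c i * a $ i) ` S \<in> lmeasurable \<and> ?Q (\<lambda>a. \<chi> i. c i * a $ i) S"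
    proof
      show "(\<lambda>a. \<chi> i. c i * a $ i) ` S \<in> lmeasurable"
        by (simp add: \<open>S \<in> lmeasurable\<close> measurable_stretch)
      show "?Q (\<lambda>a. \<chi> i. c i * a $ i) S"
        by (simp add: measure_stretch [OF \<open>S \<in> lmeasurable\<close>, of c] axis_def matrix_def det_diagonal)
    qed
  next
    fix m :: "'n" and n :: "'n" and S :: "(real, 'n) vec set"
    assume "m \<noteq> n" and "S \<in> lmeasurable"
    let ?h = "\<lambda>v::(real, 'n) vec. \<chi> i. v $ Transposition.transpose m n i"
    have lin: "linear ?h"
      by (rule linearI) (simp_all add: plus_vec_def scaleR_vec_def)
    have meq: "measure lebesgue ((\<lambda>v::(real, 'n) vec. \<chi> i. v $ Transposition.transpose m n i) ` cbox a b)
             = measure lebesgue (cbox a b)" for a b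
    proof (cases "cbox a b = {}")
      case True then show ?thesis
        by simp
    next
      case False
      then have him: "?h ` (cbox a b) \<noteq> {}"
        by blast
      have eq: "?h ` (cbox a b) = cbox (?h a) (?h b)"
        by (auto simp: image_iff lambda_swap_Galois mem_box_cart) (metis transpose_involutory)+
      show ?thesis
        using him prod.permute [OF permutes_swap_id, where S=UNIV and g="\<lambda>i. (b - a)$i", symmetric]
        by (simp add: eq content_cbox_cart False)
    qed
    have "(\<chi> i j. if Transposition.transpose m n i = j then 1 else 0) = (\<chi> i j. if j = Transposition.transpose m n i then 1 else (0::real))"
      by (auto intro!: Cart_lambda_cong)
    then have "matrix ?h = transpose(\<chi> i j. mat 1 $ i $ Transposition.transpose m n j)"
      by (auto simp: matrix_eq transpose_def axis_def mat_def matrix_def)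
    then have 1: "\<bar>det (matrix ?h)\<bar> = 1"
      by (simp add: det_permute_columns permutes_swap_id sign_swap_id abs_mult)
    show "?h ` S \<in> lmeasurable \<and> ?Q ?h S"
      using measure_linear_sufficient [OF lin \<open>S \<in> lmeasurable\<close>] meq 1 by force
  next
    fix m n :: "'n" and S :: "(real, 'n) vec set"
    assume "m \<noteq> n" and "S \<in> lmeasurable"
    let ?h = "\<lambda>v::(real, 'n) vec. \<chi> i. if i = m then v $ m + v $ n else v $ i"
    have lin: "linear ?h"
      by (rule linearI) (auto simp: algebra_simps plus_vec_def scaleR_vec_def vec_eq_iff)
    have 1: "det(matrix ?h) = 1"
      using det_shear_fin[OF \<open>m \<noteq> n\<close>] .
    have meq: "measure lebesgue (?h ` (cbox a b)) = measure lebesgue (cbox a b)" for a b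
    proof (cases "cbox a b = {}")
      case True then show ?thesis by simp
    next
      case False
      then have ne: "(+) (\<chi> i. if i = n then - a $ n else 0) ` cbox a b \<noteq> {}"
        by auto
      let ?v = "\<chi> i. if i = n then - a $ n else 0"
      have "?h ` cbox a b
            = (+) (\<chi> i. if i = m \<or> i = n then a $ n else 0) ` ?h ` (+) ?v ` (cbox a b)"
        using \<open>m \<noteq> n\<close> unfolding image_comp o_def by (force simp: vec_eq_iff)
      then have "measure lebesgue (?h ` (cbox a b))
               = measure lebesgue ((\<lambda>v. \<chi> i. if i = m then v $ m + v $ n else v $ i) `
                                   (+) ?v ` cbox a b)"
        by (rule ssubst) (rule measure_translation)
      also have "\<dots> = measure lebesgue ((\<lambda>v. \<chi> i. if i = m then v $ m + v $ n else v $ i) ` cbox (?v +a) (?v + b))"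
        by (metis (no_types, lifting) cbox_translation)
      also have "\<dots> = measure lebesgue ((+) ?v ` cbox a b)"
        apply (subst measure_shear_interval)
        using \<open>m \<noteq> n\<close> ne apply auto
        apply (simp add: cbox_translation)
        by (metis cbox_borel cbox_translation measure_completion sets_lborel)
      also have "\<dots> = measure lebesgue (cbox a b)"
        by (rule measure_translation)
        finally show ?thesis .
      qed
    show "?h ` S \<in> lmeasurable \<and> ?Q ?h S"
      using measure_linear_sufficient [OF lin \<open>S \<in> lmeasurable\<close>] meq 1 by force
  qed
  with assms show "(f ` S) \<in> lmeasurable" "?Q f S"
    by metis+
qed


definition zc :: "(real^'n::finite) set \<Rightarrow> (real^'n) set" where
  "zc W = {v. \<exists>c::real^'n \<Rightarrow> int. v = (\<Sum>w\<in>W. real_of_int (c w) *\<^sub>R w)}"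

lemma zc_add: "u \<in> zc W \<Longrightarrow> v \<in> zc W \<Longrightarrow> u + v \<in> zc W"
proof -
  assume "u \<in> zc W" "v \<in> zc W"
  then obtain c d where "u = (\<Sum>w\<in>W. real_of_int (c w) *\<^sub>R w)" "v = (\<Sum>w\<in>W. real_of_int (d w) *\<^sub>R w)"
    unfolding zc_def by blast
  then have "u + v = (\<Sum>w\<in>W. real_of_int (c w + d w) *\<^sub>R w)"
    by (simp add: sum.distrib scaleR_add_left)
  then show ?thesis unfolding zc_def by (intro CollectI exI[of _ "\<lambda>w. c w + d w"])
qed

lemma zc_uminus: "u \<in> zc W \<Longrightarrow> - u \<in> zc W"
proof -
  assume "u \<in> zc W"
  then obtain c where "u = (\<Sum>w\<in>W. real_of_int (c w) *\<^sub>R w)"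
    unfolding zc_def by blast
  then have "- u = (\<Sum>w\<in>W. real_of_int (- c w) *\<^sub>R w)"
    by (simp add: sum_negf)
  then show ?thesis unfolding zc_def by (intro CollectI exI[of _ "\<lambda>w. - c w"])
qed

lemma zc_diff: "u \<in> zc W \<Longrightarrow> v \<in> zc W \<Longrightarrow> u - v \<in> zc W"
  using zc_add[of u W "- v"] zc_uminus[of v W] by simp

lemma zc_base: "finite W \<Longrightarrow> w \<in> W \<Longrightarrow> w \<in> zc W"
proof -
  assume "finite W" "w \<in> W"
  then have "w = (\<Sum>x\<in>W. real_of_int (if x = w then 1 else 0) *\<^sub>R x)"
    by (simp add: if_distrib[of "\<lambda>t. real_of_int t *\<^sub>R _"] sum.delta cong: if_cong)
  then show ?thesis unfolding zc_def by (intro CollectI exI[of _ "\<lambda>x. if x = w then 1 else 0"])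
qed

lemma zc_mono: "finite W' \<Longrightarrow> W \<subseteq> W' \<Longrightarrow> zc W \<subseteq> zc W'"
proof
  fix v assume "finite W'" "W \<subseteq> W'" "v \<in> zc W"
  then obtain c where v: "v = (\<Sum>w\<in>W. real_of_int (c w) *\<^sub>R w)"
    unfolding zc_def by blast
  have "v = (\<Sum>w\<in>W'. real_of_int (if w \<in> W then c w else 0) *\<^sub>R w)"
    unfolding v using \<open>finite W'\<close> \<open>W \<subseteq> W'\<close>
    by (intro sum.mono_neutral_cong_left) auto
  then show "v \<in> zc W'" unfolding zc_def by (intro CollectI exI[of _ "\<lambda>w. if w \<in> W then c w else 0"])
qed

lemma det_Ints:
  fixes A :: "real^'n::finite^'n"
  assumes "\<And>i j. A$i$j \<in> \<int>"
  shows "det A \<in> \<int>"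
  unfolding det_def using assms
  by (intro Ints_sum Ints_mult Ints_prod) auto

lemma Ints_mult_eq_1:
  fixes a b :: real
  assumes "a \<in> \<int>" "b \<in> \<int>" "a * b = 1"
  shows "\<bar>a\<bar> = 1"
proof -
  obtain x y where "a = of_int x" "b = of_int y" using assms by (auto elim!: Ints_cases)
  then have "x * y = 1" using assms(3) by (metis of_int_1 of_int_eq_iff of_int_mult)
  then have "\<bar>x\<bar> = 1" using zmult_eq_1_iff by auto
  then show ?thesis using \<open>a = of_int x\<close> by simp
qed

lemma std_simplex_fin:
  "convex hull (insert 0 Basis :: (real^'n::finite) set) \<in> lmeasurable \<and>
   measure lebesgue (convex hull (insert 0 Basis :: (real^'n::finite) set)) = 1 / fact CARD('n)"
proof -
  have c: "compact (convex hull (insert 0 Basis :: (real^'n::finite) set))"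
    by (intro finite_imp_compact_convex_hull) auto
  then have "convex hull (insert 0 Basis :: (real^'n::finite) set) \<in> sets lborel"
    by (auto dest: compact_imp_closed)
  then show ?thesis using c content_std_simplex[where 'a="real^'n"]
    by (auto simp: lmeasurable_compact)
qed

lemma simplex_measure:
  fixes W :: "(real^'n::finite) set"
  assumes fin: "finite W" and card: "card W = CARD('n)"
    and ints: "\<And>w i. w \<in> W \<Longrightarrow> w$i \<in> \<int>"
    and span: "\<And>k. axis k 1 \<in> zc W"
  shows "convex hull (insert 0 W) \<in> lmeasurable \<and>
         measure lebesgue (convex hull (insert 0 W)) = 1 / fact CARD('n)"
proof -
  obtain \<beta> where bij: "bij_betw \<beta> (UNIV::'n set) W"
    using finite_same_card_bij[of "UNIV::'n set" W] fin card by auto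
  define M :: "real^'n^'n" where "M = (\<chi> i k. \<beta> k $ i)"
  have Mcol: "M *v axis k 1 = \<beta> k" for k
    by (simp add: matrix_vector_mult_basis column_def M_def vec_eq_iff)
  have "\<forall>k. \<exists>c. axis k 1 = (\<Sum>w\<in>W. real_of_int (c w) *\<^sub>R w)"
    using span unfolding zc_def by blast
  then obtain C where C: "\<And>k. axis k 1 = (\<Sum>w\<in>W. real_of_int (C k w) *\<^sub>R w)"
    by metis
  define N :: "real^'n^'n" where "N = (\<chi> j k. real_of_int (C k (\<beta> j)))"
  have "M ** N = mat 1"
  proof -
    have "(M ** N) $ i $ k = mat 1 $ i $ k" for i k
    proof -
      have "(M ** N) $ i $ k = (\<Sum>j\<in>UNIV. real_of_int (C k (\<beta> j)) *\<^sub>R \<beta> j) $ i"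
        by (simp add: matrix_matrix_mult_def M_def N_def sum_component mult.commute)
      also have "(\<Sum>j\<in>UNIV. real_of_int (C k (\<beta> j)) *\<^sub>R \<beta> j) = (\<Sum>w\<in>W. real_of_int (C k w) *\<^sub>R w)"
        using sum.reindex_bij_betw[OF bij, of "\<lambda>w. real_of_int (C k w) *\<^sub>R w"] by simp
      also have "\<dots> = axis k 1" using C by simp
      finally show ?thesis by (simp add: mat_def axis_def)
    qed
    then show ?thesis by (simp add: vec_eq_iff)
  qed
  then have "det M * det N = 1" by (metis det_I det_mul)
  moreover have "det M \<in> \<int>"
    using ints bij by (intro det_Ints) (auto simp: M_def bij_betw_def)
  moreover have "det N \<in> \<int>"
    by (intro det_Ints) (auto simp: N_def)
  ultimately have detM: "\<bar>det M\<bar> = 1" using Ints_mult_eq_1 by blast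
  define f where "f = (\<lambda>x. M *v x)"
  have lin: "linear f" unfolding f_def by (simp add: matrix_vector_mul_linear)
  have mf: "matrix f = M" unfolding f_def by simp
  have "f ` Basis = W"
  proof -
    have eqB: "Basis = range (\<lambda>k::'n. axis k (1::real))"
      by (auto simp: Basis_vec_def)
    have "f ` Basis = range \<beta>" unfolding eqB by (simp add: image_comp f_def Mcol o_def)
    then show ?thesis using bij by (simp add: bij_betw_def)
  qed
  then have img: "f ` (convex hull (insert 0 Basis)) = convex hull (insert 0 W)"
    using convex_hull_linear_image[OF lin, of "insert 0 Basis"] lin
    by (simp add: linear_0)
  have S0: "convex hull (insert 0 Basis :: (real^'n) set) \<in> lmeasurable"
    using std_simplex_fin[where 'n='n] by blast
  show ?thesis
    using std_simplex_fin[where 'n='n] measurable_linear_image_fin[OF lin S0] measure_linear_image_fin[OF lin S0]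
    unfolding img[symmetric] mf detM by simp
qed


lemma simplex_cover:
  fixes W :: "(real^'n::finite) set"
  assumes fin: "finite W" and card: "card W \<le> CARD('n)"
  shows "\<exists>N. negligible N \<and> convex hull (insert 0 W) \<subseteq>
           N \<union> {x. \<exists>c. (\<forall>w\<in>W. 0 < c w) \<and> x = (\<Sum>w\<in>W. c w *\<^sub>R w)}"
proof -
  let ?N = "\<Union>w\<in>W. span (W - {w})"
  have "negligible ?N"
  proof (rule negligible_Union)
    show "finite ((\<lambda>w. span (W - {w})) ` W)" using fin by simp
  next
    fix T assume "T \<in> (\<lambda>w. span (W - {w})) ` W"
    then obtain w where w: "w \<in> W" "T = span (W - {w})" by blast
    have "dim (span (W - {w})) \<le> card (W - {w})"
      using dim_le_card[of "W - {w}" "W - {w}"] fin by (simp add: span_superset)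
    also have "\<dots> < CARD('n)" using card_Diff1_less[OF fin w(1)] card
      by linarith
    finally show "negligible T" using w by (intro negligible_lowdim) simp
  qed
  moreover have "convex hull (insert 0 W) \<subseteq>
           ?N \<union> {x. \<exists>c. (\<forall>w\<in>W. 0 < c w) \<and> x = (\<Sum>w\<in>W. c w *\<^sub>R w)}"
  proof
    fix x assume "x \<in> convex hull (insert 0 W)"
    then obtain u where u: "\<forall>y\<in>insert 0 W. 0 \<le> u y" "sum u (insert 0 W) = 1"
        "(\<Sum>y\<in>insert 0 W. u y *\<^sub>R y) = x"
      using convex_hull_finite[of "insert 0 W"] fin by auto
    have x: "x = (\<Sum>y\<in>W. u y *\<^sub>R y)"
    proof (cases "0 \<in> W")
      case True then show ?thesis using u by (simp add: insert_absorb)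
    next
      case False then show ?thesis using u fin by simp
    qed
    show "x \<in> ?N \<union> {x. \<exists>c. (\<forall>w\<in>W. 0 < c w) \<and> x = (\<Sum>w\<in>W. c w *\<^sub>R w)}"
    proof (cases "\<forall>w\<in>W. 0 < u w")
      case True then show ?thesis using x by blast
    next
      case False
      then obtain w where w: "w \<in> W" "u w = 0" proof -
        from False obtain w where "w \<in> W" "\<not> 0 < u w" by blast
        moreover have "0 \<le> u w" using u(1) \<open>w \<in> W\<close> by blast
        ultimately show ?thesis using that by force
      qed
      have "x = (\<Sum>y\<in>W - {w}. u y *\<^sub>R y)"
        using x w fin by (simp add: sum.remove)
      also have "\<dots> \<in> span (W - {w})"
        by (intro span_sum span_mul span_base) auto
      finally show ?thesis using w by blast
    qed
  qed
  ultimately show ?thesis by blast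
qed


lemma nonext0:
  assumes "r \<in> {1..<n}" "asrc orient r \<in> isupp X" "atgt orient r \<in> isupp Y"
    "asrc orient r \<notin> isupp Y" "atgt orient r \<notin> isupp X"
  shows "\<not> ext1_zero TYPE('k::field) orient n X Y"
proof
  assume e: "ext1_zero TYPE('k) orient n X Y"
  obtain f :: "nat \<Rightarrow> 'k" where f:
    "\<forall>v. v \<notin> {1..n} \<inter> isupp X \<inter> isupp Y \<longrightarrow> f v = 0"
    "\<forall>i\<in>{1..<n}. asrc orient i \<in> isupp X \<and> atgt orient i \<in> isupp Y \<longrightarrow>
            (if i = r then 1 else 0) = f (asrc orient i) - f (atgt orient i)"
    using spec[OF e[unfolded ext1_zero_def], of "\<lambda>i. if i = r then 1 else 0"] by blast
  from f(2) assms(1,2,3) have "(1::'k) = f (asrc orient r) - f (atgt orient r)" by auto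
  moreover have "f (asrc orient r) = 0" "f (atgt orient r) = 0" using f(1) assms(4,5) by auto
  ultimately show False by simp
qed

lemma const_chain:
  assumes "\<forall>i\<in>{c..<d}. f i = f (Suc i)" "c \<le> d"
  shows "f c = f d"
  using assms
proof (induction d)
  case 0 then show ?case by simp
next
  case (Suc d)
  show ?case
  proof (cases "c = Suc d")
    case True then show ?thesis by simp
  next
    case False
    then have "c \<le> d" using Suc.prems by simp
    then have "f c = f d" using Suc by auto
    also have "f d = f (Suc d)" using Suc.prems \<open>c \<le> d\<close> by auto
    finally show ?thesis .
  qed
qed

lemma arrow_ends: "{asrc orient i, atgt orient i} = {i, Suc i}"
  by (auto simp: asrc_def atgt_def)

lemma nonext2:
  assumes cd: "1 \<le> c" "c \<le> d" "d \<le> n" and sub: "{c..d} \<subseteq> isupp A \<inter> isupp B"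
    and r: "r \<in> {1..<n}" "asrc orient r \<in> isupp A" "atgt orient r \<in> isupp B"
    and s: "s \<in> {1..<n}" "asrc orient s \<in> isupp A" "atgt orient s \<in> isupp B"
    and rs: "r \<noteq> s"
    and rc: "(asrc orient r = c \<and> atgt orient r \<notin> isupp A \<inter> isupp B) \<or>
             (atgt orient r = c \<and> asrc orient r \<notin> isupp A \<inter> isupp B)"
    and sd: "(asrc orient s = d \<and> atgt orient s \<notin> isupp A \<inter> isupp B) \<or>
             (atgt orient s = d \<and> asrc orient s \<notin> isupp A \<inter> isupp B)"
  shows "\<not> ext1_zero TYPE('k::field) orient n A B"
proof
  assume e: "ext1_zero TYPE('k) orient n A B"
  obtain f :: "nat \<Rightarrow> 'k" where f:
    "\<forall>v. v \<notin> {1..n} \<inter> isupp A \<inter> isupp B \<longrightarrow> f v = 0"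
    "\<forall>i\<in>{1..<n}. asrc orient i \<in> isupp A \<and> atgt orient i \<in> isupp B \<longrightarrow>
            (if i = r then 1 else 0) = f (asrc orient i) - f (atgt orient i)"
    using spec[OF e[unfolded ext1_zero_def], of "\<lambda>i. if i = r then 1 else 0"] by blast
  have "\<forall>i\<in>{c..<d}. f i = f (Suc i)"
  proof
    fix i assume i: "i \<in> {c..<d}"
    have ends: "asrc orient i \<in> {c..d}" "atgt orient i \<in> {c..d}"
      using i arrow_ends[of orient i] by (auto simp: asrc_def atgt_def)
    have "i \<noteq> r"
    proof
      assume "i = r"
      then show False using rc ends sub by auto
    qed
    moreover have "i \<in> {1..<n}" using i cd by auto
    ultimately have "0 = f (asrc orient i) - f (atgt orient i)"
      using f(2) ends sub by force
    then show "f i = f (Suc i)"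
      by (auto simp: asrc_def atgt_def split: if_splits)
  qed
  then have fcd: "f c = f d" using const_chain cd by blast
  have "(1::'k) = f (asrc orient r) - f (atgt orient r)" using f(2) r by auto
  then have "f c = 1 \<or> f c = -1"
  proof -
    assume h: "(1::'k) = f (asrc orient r) - f (atgt orient r)"
    show ?thesis
    proof (cases "asrc orient r = c \<and> atgt orient r \<notin> isupp A \<inter> isupp B")
      case True
      then have "f (atgt orient r) = 0" using f(1) by auto
      then show ?thesis using h True by simp
    next
      case False
      then have "atgt orient r = c" "f (asrc orient r) = 0" using rc f(1) by auto
      then have "f c = - 1" using h by (simp add: minus_equation_iff)
      then show ?thesis by simp
    qed
  qed
  moreover have "0 = f (asrc orient s) - f (atgt orient s)" using f(2) s rs by auto
  then have "f d = 0" using sd f(1) by auto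
  ultimately show False using fcd by auto
qed

definition crules :: "(nat \<Rightarrow> bool) \<Rightarrow> interval set \<Rightarrow> bool" where
  "crules orient F \<longleftrightarrow> (\<forall>X\<in>F. \<forall>Y\<in>F.
     Suc (snd X) \<noteq> fst Y \<and>
     (fst X < fst Y \<and> snd Y < snd X \<longrightarrow> orient (fst Y - 1) = orient (snd Y)) \<and>
     (fst X < fst Y \<and> fst Y \<le> snd X \<and> snd X < snd Y \<longrightarrow> orient (fst Y - 1) \<noteq> orient (snd X)))"

lemma crules_mono: "crules orient F \<Longrightarrow> G \<subseteq> F \<Longrightarrow> crules orient G"
  unfolding crules_def by blast

lemma ruleH:
  assumes X: "X \<in> intervals n" and Y: "Y \<in> intervals n" and adj: "Suc (snd X) = fst Y"
    and e1: "ext1_zero TYPE('k::field) orient n X Y" and e2: "ext1_zero TYPE('k) orient n Y X"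
  shows False
proof -
  obtain a b c d where ab: "X = (a,b)" "1 \<le> a" "a \<le> b" "b \<le> n" and cd: "Y = (c,d)" "1 \<le> c" "c \<le> d" "d \<le> n"
    using X Y unfolding intervals_def by auto
  have r: "b \<in> {1..<n}" using ab cd adj by auto
  show False
  proof (cases "orient b")
    case True
    have "\<not> ext1_zero TYPE('k) orient n X Y"
      by (rule nonext0[OF r]) (use True ab cd adj in \<open>auto simp: asrc_def atgt_def isupp_def\<close>)
    then show False using e1 by simp
  next
    case False
    have "\<not> ext1_zero TYPE('k) orient n Y X"
      by (rule nonext0[OF r]) (use False ab cd adj in \<open>auto simp: asrc_def atgt_def isupp_def\<close>)
    then show False using e2 by simp
  qed
qed

lemma ruleN:
  assumes X: "X \<in> intervals n" and Y: "Y \<in> intervals n" and nest: "fst X < fst Y" "snd Y < snd X"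
    and e1: "ext1_zero TYPE('k::field) orient n X Y" and e2: "ext1_zero TYPE('k) orient n Y X"
  shows "orient (fst Y - 1) = orient (snd Y)"
proof (rule ccontr)
  assume ne: "orient (fst Y - 1) \<noteq> orient (snd Y)"
  obtain a b c d where ab: "X = (a,b)" "1 \<le> a" "a \<le> b" "b \<le> n" and cd: "Y = (c,d)" "1 \<le> c" "c \<le> d" "d \<le> n"
    using X Y unfolding intervals_def by auto
  have r: "c - 1 \<in> {1..<n}" and s: "d \<in> {1..<n}" and rs: "c - 1 \<noteq> d"
    using ab cd nest by auto
  have sub: "{c..d} \<subseteq> isupp X \<inter> isupp Y" using ab cd nest by (auto simp: isupp_def)
  have sub': "{c..d} \<subseteq> isupp Y \<inter> isupp X" using sub by auto
  show False
  proof (cases "orient (c - 1)")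
    case True
    then have od: "\<not> orient d" using ne ab cd by simp
    have "\<not> ext1_zero TYPE('k) orient n X Y"
      by (rule nonext2[OF cd(2,3,4) sub r _ _ s _ _ rs])
         (use True od ab cd nest in \<open>auto simp: asrc_def atgt_def isupp_def\<close>)
    then show False using e1 by simp
  next
    case False
    then have od: "orient d" using ne ab cd by simp
    have "\<not> ext1_zero TYPE('k) orient n Y X"
      by (rule nonext2[OF cd(2,3,4) sub' r _ _ s _ _ rs])
         (use False od ab cd nest in \<open>auto simp: asrc_def atgt_def isupp_def\<close>)
    then show False using e2 by simp
  qed
qed

lemma ruleC:
  assumes X: "X \<in> intervals n" and Y: "Y \<in> intervals n"
    and cr: "fst X < fst Y" "fst Y \<le> snd X" "snd X < snd Y"
    and e1: "ext1_zero TYPE('k::field) orient n X Y" and e2: "ext1_zero TYPE('k) orient n Y X"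
  shows "orient (fst Y - 1) \<noteq> orient (snd X)"
proof
  assume eq: "orient (fst Y - 1) = orient (snd X)"
  obtain a b c d where ab: "X = (a,b)" "1 \<le> a" "a \<le> b" "b \<le> n" and cd: "Y = (c,d)" "1 \<le> c" "c \<le> d" "d \<le> n"
    using X Y unfolding intervals_def by auto
  have r: "c - 1 \<in> {1..<n}" and s: "b \<in> {1..<n}" and rs: "c - 1 \<noteq> b"
    using ab cd cr by auto
  have cb: "1 \<le> c" "c \<le> b" "b \<le> n" using ab cd cr by auto
  have sub: "{c..b} \<subseteq> isupp X \<inter> isupp Y" using ab cd cr by (auto simp: isupp_def)
  have sub': "{c..b} \<subseteq> isupp Y \<inter> isupp X" using sub by auto
  show False
  proof (cases "orient (c - 1)")
    case True
    then have od: "orient b" using eq ab cd by simp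
    have "\<not> ext1_zero TYPE('k) orient n X Y"
      by (rule nonext2[OF cb sub r _ _ s _ _ rs])
         (use True od ab cd cr in \<open>auto simp: asrc_def atgt_def isupp_def\<close>)
    then show False using e1 by simp
  next
    case False
    then have od: "\<not> orient b" using eq ab cd by simp
    have "\<not> ext1_zero TYPE('k) orient n Y X"
      by (rule nonext2[OF cb sub' r _ _ s _ _ rs])
         (use False od ab cd cr in \<open>auto simp: asrc_def atgt_def isupp_def\<close>)
    then show False using e2 by simp
  qed
qed

lemma tilting_crules:
  assumes "T \<subseteq> intervals n" "\<forall>X\<in>T. \<forall>Y\<in>T. ext1_zero TYPE('k::field) orient n X Y"
  shows "crules orient T"
  unfolding crules_def
proof (intro ballI conjI impI)
  fix X Y assume XY: "X \<in> T" "Y \<in> T"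
  then have I: "X \<in> intervals n" "Y \<in> intervals n" and e: "ext1_zero TYPE('k) orient n X Y" "ext1_zero TYPE('k) orient n Y X"
    using assms by auto
  show "Suc (snd X) \<noteq> fst Y" using ruleH[OF I _ e] by blast
  show "orient (fst Y - 1) = orient (snd Y)" if "fst X < fst Y \<and> snd Y < snd X"
    using ruleN[OF I _ _ e] that by blast
  show "orient (fst Y - 1) \<noteq> orient (snd X)" if "fst X < fst Y \<and> fst Y \<le> snd X \<and> snd X < snd Y"
    using ruleC[OF I _ _ _ e] that by blast
qed


lemma crulesD:
  assumes "crules orient F" "X \<in> F" "Y \<in> F"
  shows "Suc (snd X) \<noteq> fst Y"
    "fst X < fst Y \<Longrightarrow> snd Y < snd X \<Longrightarrow> orient (fst Y - 1) = orient (snd Y)"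
    "fst X < fst Y \<Longrightarrow> fst Y \<le> snd X \<Longrightarrow> snd X < snd Y \<Longrightarrow> orient (fst Y - 1) \<noteq> orient (snd X)"
  using assms unfolding crules_def by blast+

lemma leaf:
  assumes fin: "finite F" and ne: "F \<noteq> {}" and sub: "F \<subseteq> intervals n" and cr: "crules orient F"
  shows "\<exists>w X. X \<in> F \<and> (fst X = Suc w \<or> snd X = w) \<and>
           (\<forall>Y\<in>F. (fst Y = Suc w \<or> snd Y = w) \<longrightarrow> Y = X)"
proof -
  have iv: "\<And>X. X \<in> F \<Longrightarrow> 1 \<le> fst X \<and> fst X \<le> snd X \<and> snd X \<le> n"
    using sub unfolding intervals_def by auto
  define A where "A = Max (fst ` F)"
  have Amax: "\<And>X. X \<in> F \<Longrightarrow> fst X \<le> A" unfolding A_def using fin by auto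
  have "A \<in> fst ` F" unfolding A_def using fin ne by (intro Max_in) auto
  then obtain X0 where X0: "X0 \<in> F" "fst X0 = A" by auto
  have A1: "1 \<le> A" using iv[OF X0(1)] X0(2) by simp
  define B where "B = {q. (A, q) \<in> F}"
  have "B \<subseteq> snd ` F" unfolding B_def
  proof
    fix x assume "x \<in> {q. (A, q) \<in> F}"
    then have "(A, x) \<in> F" by simp
    then have "snd (A, x) \<in> snd ` F" by (rule imageI)
    then show "x \<in> snd ` F" by simp
  qed
  then have finB: "finite B" using fin finite_subset by blast
  have Bmem: "\<And>q. q \<in> B \<longleftrightarrow> (A, q) \<in> F"
    unfolding B_def by simp
  show ?thesis
  proof (cases "\<forall>X\<in>F. fst X = A \<longrightarrow> X = X0")
    case True
    have "\<forall>Y\<in>F. (fst Y = Suc (A - 1) \<or> snd Y = A - 1) \<longrightarrow> Y = X0"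
    proof (intro ballI impI)
      fix Y assume Y: "Y \<in> F" "fst Y = Suc (A - 1) \<or> snd Y = A - 1"
      show "Y = X0"
      proof (cases "fst Y = Suc (A - 1)")
        case True
        then have "fst Y = A" using A1 by simp
        then show ?thesis using \<open>\<forall>X\<in>F. fst X = A \<longrightarrow> X = X0\<close> Y(1) by blast
      next
        case False
        then have "Suc (snd Y) = fst X0" using Y X0 A1 by auto
        then show ?thesis using crulesD(1)[OF cr Y(1) X0(1)] by blast
      qed
    qed
    moreover have "fst X0 = Suc (A - 1)" using X0 A1 by simp
    ultimately show ?thesis using X0(1) by blast
  next
    case False
    then obtain X1 where X1: "X1 \<in> F" "fst X1 = A" "X1 \<noteq> X0" by blast
    then have "snd X1 \<noteq> snd X0" using X0 prod_eqI[of X1 X0] by auto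
    define q1 where "q1 = Min B"
    have "snd X0 \<in> B" using X0 prod.collapse[of X0] by (simp add: B_def)
    have "snd X1 \<in> B" using X1 prod.collapse[of X1] by (simp add: B_def)
    have q1B: "q1 \<in> B" unfolding q1_def using finB \<open>snd X0 \<in> B\<close> by (intro Min_in) auto
    have q1min: "\<And>q. q \<in> B \<Longrightarrow> q1 \<le> q" unfolding q1_def using finB by auto
    have ne2: "B - {q1} \<noteq> {}" using \<open>snd X0 \<in> B\<close> \<open>snd X1 \<in> B\<close> \<open>snd X1 \<noteq> snd X0\<close> by blast
    define q2 where "q2 = Min (B - {q1})"
    have "q2 \<in> B - {q1}" unfolding q2_def using ne2 finB by (intro Min_in) auto
    then have q2B: "q2 \<in> B" "q2 \<noteq> q1" by auto
    have q12: "q1 < q2" using q1min[OF q2B(1)] q2B(2) by simp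
    have F1: "(A, q1) \<in> F" and F2: "(A, q2) \<in> F" using q1B q2B Bmem by auto
    have nosrc: "\<And>Y q. Y \<in> F \<Longrightarrow> q \<in> B \<Longrightarrow> fst Y \<noteq> Suc q"
    proof
      fix Y q assume "Y \<in> F" "q \<in> B" "fst Y = Suc q"
      then have "A \<le> q" using iv[of "(A,q)"] Bmem by simp
      then show False using Amax[OF \<open>Y \<in> F\<close>] \<open>fst Y = Suc q\<close> by simp
    qed
    have leafs: "(\<forall>Y\<in>F. (fst Y = Suc q1 \<or> snd Y = q1) \<longrightarrow> Y = (A, q1)) \<or>
                 (\<forall>Y\<in>F. (fst Y = Suc q2 \<or> snd Y = q2) \<longrightarrow> Y = (A, q2))"
    proof (rule ccontr)
      assume nl: "\<not> ?thesis"
      then have nl1: "\<not> (\<forall>Y\<in>F. (fst Y = Suc q1 \<or> snd Y = q1) \<longrightarrow> Y = (A, q1))"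
        and nl2: "\<not> (\<forall>Y\<in>F. (fst Y = Suc q2 \<or> snd Y = q2) \<longrightarrow> Y = (A, q2))"
        by simp_all
      from nl1 obtain Y1x where Y1x: "Y1x \<in> F" "fst Y1x = Suc q1 \<or> snd Y1x = q1" "Y1x \<noteq> (A, q1)"
        by blast
      define Y1 where "Y1 = Y1x"
      have Y1: "Y1 \<in> F" "snd Y1 = q1" "Y1 \<noteq> (A, q1)"
        unfolding Y1_def using Y1x nosrc[OF Y1x(1) q1B] by auto
      from nl2 obtain Y2x where Y2x: "Y2x \<in> F" "fst Y2x = Suc q2 \<or> snd Y2x = q2" "Y2x \<noteq> (A, q2)"
        by blast
      define Y2 where "Y2 = Y2x"
      have Y2: "Y2 \<in> F" "snd Y2 = q2" "Y2 \<noteq> (A, q2)"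
        unfolding Y2_def using Y2x nosrc[OF Y2x(1) q2B(1)] by auto
      have "fst Y1 \<noteq> A" using Y1 prod_eqI[of Y1 "(A, q1)"] by auto
      then have f1: "fst Y1 < A" using Amax[OF Y1(1)] by simp
      have "fst Y2 \<noteq> A" using Y2 prod_eqI[of Y2 "(A, q2)"] by auto
      then have f2: "fst Y2 < A" using Amax[OF Y2(1)] by simp
      have Aq1: "A \<le> q1" using iv[OF F1] by simp
      have c1: "orient (A - 1) \<noteq> orient q1"
        using crulesD(3)[OF cr Y1(1) F2] f1 Aq1 q12 Y1(2) by simp
      have c2: "orient (A - 1) = orient q1"
        using crulesD(2)[OF cr Y2(1) F1] f2 q12 Y2(2) by simp
      show False using c1 c2 by simp
    qed
    then show ?thesis
    proof
      assume "\<forall>Y\<in>F. (fst Y = Suc q1 \<or> snd Y = q1) \<longrightarrow> Y = (A, q1)"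
      moreover have "snd (A, q1) = q1" by simp
      ultimately show ?thesis using F1 by blast
    next
      assume "\<forall>Y\<in>F. (fst Y = Suc q2 \<or> snd Y = q2) \<longrightarrow> Y = (A, q2)"
      moreover have "snd (A, q2) = q2" by simp
      ultimately show ?thesis using F2 by blast
    qed
  qed
qed

definition cvec :: "(nat \<Rightarrow> 'n::finite) \<Rightarrow> nat \<Rightarrow> real^'n" where
  "cvec e k = (\<Sum>j\<in>{1..k}. axis (e j) 1)"

lemma dimv_cvec:
  assumes "1 \<le> fst X" "fst X \<le> snd X"
  shows "dimv e X = cvec e (snd X) - cvec e (fst X - 1)"
proof -
  have eq: "{1..snd X} = {1..fst X - 1} \<union> {fst X..snd X}" using assms by auto
  have disj: "{1..fst X - 1} \<inter> {fst X..snd X} = {}" using assms by auto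
  have "cvec e (snd X) = cvec e (fst X - 1) + dimv e X"
    unfolding cvec_def dimv_def isupp_def
    by (simp only: eq sum.union_disjoint[OF finite_atLeastAtMost finite_atLeastAtMost disj])
  then show ?thesis by simp
qed

lemma axis_cvec:
  assumes "1 \<le> i"
  shows "axis (e i) 1 = cvec e i - cvec e (i - 1)"
proof -
  have eq: "{1..i} = insert i {1..i - 1}" using assms by auto
  have ni: "i \<notin> {1..i-1}" using assms by auto
  have "cvec e i = axis (e i) 1 + cvec e (i - 1)"
    unfolding cvec_def by (simp only: eq sum.insert[OF finite_atLeastAtMost ni])
  then show ?thesis by simp
qed

lemma zc_0: "0 \<in> zc W"
  unfolding zc_def by (intro CollectI exI[of _ "\<lambda>_. 0"]) simp

lemma treebound:
  fixes e :: "nat \<Rightarrow> 'n::finite"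
  assumes "finite F" "F \<subseteq> intervals n" "crules orient F" "finite V" "V \<noteq> {}"
    "\<forall>X\<in>F. fst X - 1 \<in> V \<and> snd X \<in> V"
  shows "card F + 1 \<le> card V \<and>
    (card F + 1 = card V \<longrightarrow> (\<forall>k\<in>V. \<forall>k'\<in>V. cvec e k - cvec e k' \<in> zc (dimv e ` F)))"
  using assms
proof (induction "card F" arbitrary: F V rule: less_induct)
  case less
  show ?case
  proof (cases "F = {}")
    case True
    have c1: "card V \<ge> 1" using less.prems(4,5) by (simp add: Suc_leI card_gt_0_iff)
    have kk: "k = k'" if "card V = 1" "k \<in> V" "k' \<in> V" for k k'
      using that by (metis card_1_singletonE singletonD)
    have "card F + 1 = card V \<longrightarrow> (\<forall>k\<in>V. \<forall>k'\<in>V. cvec e k - cvec e k' \<in> zc (dimv e ` F))"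
    proof (intro impI ballI)
      fix k k' assume "card F + 1 = card V" "k \<in> V" "k' \<in> V"
      then have "k = k'" using kk True by simp
      then show "cvec e k - cvec e k' \<in> zc (dimv e ` F)" using zc_0 by simp
    qed
    then show ?thesis using c1 True by simp
  next
    case False
    obtain w X where X: "X \<in> F" "fst X = Suc w \<or> snd X = w"
      and uniq: "\<forall>Y\<in>F. (fst Y = Suc w \<or> snd Y = w) \<longrightarrow> Y = X"
      using leaf[OF less.prems(1) False less.prems(2,3)] by blast
    have ivX: "1 \<le> fst X" "fst X \<le> snd X" using X less.prems(2) unfolding intervals_def by auto
    define x where "x = (if fst X = Suc w then snd X else fst X - 1)"
    have wV: "w \<in> V" using X less.prems(6) by auto
    have xV: "x \<in> V" using X less.prems(6) unfolding x_def by auto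
    have xw: "x \<noteq> w" using X ivX unfolding x_def by auto
    define F' where "F' = F - {X}"
    define V' where "V' = V - {w}"
    have cF: "card F = Suc (card F')" unfolding F'_def using card.remove[OF less.prems(1) X(1)] .
    have cV: "card V = Suc (card V')" unfolding V'_def using card.remove[OF less.prems(4) wV] .
    have F'ends: "\<forall>Y\<in>F'. fst Y - 1 \<in> V' \<and> snd Y \<in> V'"
    proof
      fix Y assume Y: "Y \<in> F'"
      then have YF: "Y \<in> F" "Y \<noteq> X" unfolding F'_def by auto
      have "1 \<le> fst Y" using YF less.prems(2) unfolding intervals_def by auto
      then have "fst Y - 1 \<noteq> w" "snd Y \<noteq> w" using uniq YF by auto
      then show "fst Y - 1 \<in> V' \<and> snd Y \<in> V'" using YF less.prems(6) unfolding V'_def by auto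
    qed
    have IH: "card F' + 1 \<le> card V' \<and>
      (card F' + 1 = card V' \<longrightarrow> (\<forall>k\<in>V'. \<forall>k'\<in>V'. cvec e k - cvec e k' \<in> zc (dimv e ` F')))"
      using less.hyps[of F' V'] cF less.prems F'ends xV xw
      unfolding F'_def V'_def by (auto intro: crules_mono)
    have "card F + 1 = card V \<longrightarrow> (\<forall>k\<in>V. \<forall>k'\<in>V. cvec e k - cvec e k' \<in> zc (dimv e ` F))"
    proof
      assume eq: "card F + 1 = card V"
      let ?D = "zc (dimv e ` F)"
      have mono: "zc (dimv e ` F') \<subseteq> ?D"
        by (rule zc_mono) (use less.prems(1) in \<open>auto simp: F'_def\<close>)
      have dX: "dimv e X \<in> ?D" using X less.prems(1) by (intro zc_base) auto
      have wx: "cvec e w - cvec e x \<in> ?D"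
      proof (cases "fst X = Suc w")
        case True
        then have "cvec e w - cvec e x = - dimv e X" using dimv_cvec[OF ivX, of e] unfolding x_def by simp
        then show ?thesis using zc_uminus[OF dX] by simp
      next
        case False
        then have "cvec e w - cvec e x = dimv e X" using dimv_cvec[OF ivX, of e] X unfolding x_def by simp
        then show ?thesis using dX by simp
      qed
      have kx: "cvec e k - cvec e x \<in> ?D" if "k \<in> V" for k
      proof (cases "k = w")
        case True then show ?thesis using wx by simp
      next
        case False
        then have "k \<in> V'" "x \<in> V'" using that xV xw unfolding V'_def by auto
        then show ?thesis using IH eq cF cV mono by auto
      qed
      show "\<forall>k\<in>V. \<forall>k'\<in>V. cvec e k - cvec e k' \<in> ?D"
      proof (intro ballI)
        fix k k' assume "k \<in> V" "k' \<in> V"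
        have "cvec e k - cvec e k' = (cvec e k - cvec e x) - (cvec e k' - cvec e x)" by simp
        then show "cvec e k - cvec e k' \<in> ?D" using kx[OF \<open>k \<in> V\<close>] kx[OF \<open>k' \<in> V\<close>] zc_diff by metis
      qed
    qed
    then show ?thesis using IH cF cV by simp
  qed
qed


lemma intervals_finite: "finite (intervals n)"
proof -
  have "intervals n \<subseteq> {1..n} \<times> {1..n}" unfolding intervals_def by auto
  then show ?thesis by (rule finite_subset) simp
qed

lemma Ibound:
  fixes e :: "nat \<Rightarrow> 'n::finite"
  assumes "finite I" "I \<subseteq> {1..n}"
  shows "\<forall>T. T \<subseteq> intervals n \<and> crules orient T \<and> (\<forall>X\<in>T. isupp X \<subseteq> I) \<longrightarrow>
     card T \<le> card I \<and> (card T = card I \<longrightarrow> (\<forall>i\<in>I. axis (e i) 1 \<in> zc (dimv e ` T)))"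
  using assms
proof (induction "card I" arbitrary: I rule: less_induct)
  case less
  show ?case
  proof (intro allI impI)
    fix T assume T: "T \<subseteq> intervals n \<and> crules orient T \<and> (\<forall>X\<in>T. isupp X \<subseteq> I)"
    have finT: "finite T" using T intervals_finite finite_subset by blast
    have ivT: "\<And>X. X \<in> T \<Longrightarrow> 1 \<le> fst X \<and> fst X \<le> snd X \<and> snd X \<le> n"
      using T unfolding intervals_def by auto
    have suppT: "\<And>X. X \<in> T \<Longrightarrow> {fst X..snd X} \<subseteq> I" using T unfolding isupp_def by auto
    show "card T \<le> card I \<and> (card T = card I \<longrightarrow> (\<forall>i\<in>I. axis (e i) 1 \<in> zc (dimv e ` T)))"
    proof (cases "I = {}")
      case True
      then have "T = {}" using suppT ivT by fastforce
      then show ?thesis using True by simp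
    next
      case Ine: False
      define u where "u = Min I"
      define m where "m = Max I"
      have uI: "u \<in> I" and mI: "m \<in> I" unfolding u_def m_def using less.prems Ine by auto
      have um: "\<And>i. i \<in> I \<Longrightarrow> u \<le> i \<and> i \<le> m" unfolding u_def m_def using less.prems by auto
      have u1: "1 \<le> u" using uI less.prems by auto
      show ?thesis
      proof (cases "I = {u..m}")
        case True
        define V where "V = {u - 1..m}"
        have cV: "card V = card I + 1" unfolding V_def True using u1 um[OF mI] by simp
        have ends: "\<forall>X\<in>T. fst X - 1 \<in> V \<and> snd X \<in> V"
        proof
          fix X assume "X \<in> T"
          then have "fst X \<in> I" "snd X \<in> I" using suppT[OF \<open>X \<in> T\<close>] ivT[OF \<open>X \<in> T\<close>] by auto
          then show "fst X - 1 \<in> V \<and> snd X \<in> V" using um unfolding V_def by force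
        qed
        have tb: "card T + 1 \<le> card V \<and>
          (card T + 1 = card V \<longrightarrow> (\<forall>k\<in>V. \<forall>k'\<in>V. cvec e k - cvec e k' \<in> zc (dimv e ` T)))"
          using treebound[of T n orient V e] finT T ends um[OF uI] unfolding V_def by auto
        have "card T = card I \<longrightarrow> (\<forall>i\<in>I. axis (e i) 1 \<in> zc (dimv e ` T))"
        proof (intro impI ballI)
          fix i assume eq: "card T = card I" and i: "i \<in> I"
          have "i \<in> V" "i - 1 \<in> V" using um[OF i] unfolding V_def by auto
          then have "cvec e i - cvec e (i - 1) \<in> zc (dimv e ` T)" using tb eq cV by auto
          then show "axis (e i) 1 \<in> zc (dimv e ` T)" using axis_cvec[of i e] u1 um[OF i] by simp
        qed
        then show ?thesis using tb cV by simp
      next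
        case False
        have "I \<subseteq> {u..m}" using um by auto
        then have "\<exists>g\<in>{u..m}. g \<notin> I" using False by blast
        then obtain g where g: "u \<le> g" "g \<le> m" "g \<notin> I" by auto
        have ug: "u < g" and gm: "g < m" using g uI mI by (auto simp: le_less)
        define IL where "IL = {i\<in>I. i < g}"
        define IR where "IR = {i\<in>I. g < i}"
        define TL where "TL = {X\<in>T. snd X < g}"
        define TR where "TR = {X\<in>T. g < fst X}"
        have gx: "\<forall>x\<in>I. x < g \<or> g < x" using g(3) by (metis linorder_neqE_nat)
        have IU: "I = IL \<union> IR" "IL \<inter> IR = {}" unfolding IL_def IR_def using gx by auto
        have TU: "T = TL \<union> TR"
        proof -
          have "X \<in> TL \<union> TR" if "X \<in> T" for X
          proof -
            have "g \<notin> {fst X..snd X}" using suppT[OF that] g by auto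
            then show ?thesis unfolding TL_def TR_def using that by auto
          qed
          then show ?thesis unfolding TL_def TR_def by auto
        qed
        have TD: "TL \<inter> TR = {}" unfolding TL_def TR_def using ivT by fastforce
        have "IL \<subset> I" unfolding IL_def using mI gm by (simp add: psubset_eq) (metis mem_Collect_eq not_less_iff_gr_or_eq)
        then have cIL: "card IL < card I" using less.prems(1) by (rule psubset_card_mono[rotated])
        have "IR \<subset> I" unfolding IR_def using uI ug by (simp add: psubset_eq) (metis mem_Collect_eq not_less_iff_gr_or_eq)
        then have cIR: "card IR < card I" using less.prems(1) by (rule psubset_card_mono[rotated])
        have crT: "crules orient T" using T by blast
        have finIL: "finite IL" "IL \<subseteq> {1..n}" using less.prems unfolding IL_def by auto
        have finIR: "finite IR" "IR \<subseteq> {1..n}" using less.prems unfolding IR_def by auto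
        have hL: "card TL \<le> card IL \<and> (card TL = card IL \<longrightarrow> (\<forall>i\<in>IL. axis (e i) 1 \<in> zc (dimv e ` TL)))"
        proof -
          have p1: "TL \<subseteq> intervals n" using T unfolding TL_def by auto
          have p2: "crules orient TL" unfolding TL_def by (rule crules_mono[OF crT]) auto
          have p3: "\<forall>X\<in>TL. isupp X \<subseteq> IL"
          proof
            fix X assume X: "X \<in> TL"
            then have "X \<in> T" "snd X < g" unfolding TL_def by auto
            then show "isupp X \<subseteq> IL" using suppT[of X] unfolding IL_def isupp_def by auto
          qed
          show ?thesis using less.hyps[OF cIL finIL, rule_format, of TL] p1 p2 p3 by simp
        qed
        have hR: "card TR \<le> card IR \<and> (card TR = card IR \<longrightarrow> (\<forall>i\<in>IR. axis (e i) 1 \<in> zc (dimv e ` TR)))"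
        proof -
          have p1: "TR \<subseteq> intervals n" using T unfolding TR_def by auto
          have p2: "crules orient TR" unfolding TR_def by (rule crules_mono[OF crT]) auto
          have p3: "\<forall>X\<in>TR. isupp X \<subseteq> IR"
          proof
            fix X assume X: "X \<in> TR"
            then have "X \<in> T" "g < fst X" unfolding TR_def by auto
            then show "isupp X \<subseteq> IR" using suppT[of X] unfolding IR_def isupp_def by auto
          qed
          show ?thesis using less.hyps[OF cIR finIR, rule_format, of TR] p1 p2 p3 by simp
        qed
        have finL: "finite TL" "finite TR" using finT TU by auto
        have cT: "card T = card TL + card TR" using TU TD finL card_Un_disjoint by metis
        have cI: "card I = card IL + card IR" using IU less.prems(1) card_Un_disjoint
          by (metis finite_Un)
        have monoL: "zc (dimv e ` TL) \<subseteq> zc (dimv e ` T)" using finT TU by (intro zc_mono) auto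
        have monoR: "zc (dimv e ` TR) \<subseteq> zc (dimv e ` T)" using finT TU by (intro zc_mono) auto
        have "card T = card I \<longrightarrow> (\<forall>i\<in>I. axis (e i) 1 \<in> zc (dimv e ` T))"
        proof (intro impI ballI)
          fix i assume eq: "card T = card I" and i: "i \<in> I"
          then have "card TL = card IL" "card TR = card IR" using cT cI hL hR by auto
          then show "axis (e i) 1 \<in> zc (dimv e ` T)" using i IU hL hR monoL monoR by blast
        qed
        then show ?thesis using cT cI hL hR by simp
      qed
    qed
  qed
qed

lemma tilting_zspan:
  fixes e :: "nat \<Rightarrow> 'n::finite"
  assumes "tilting_on TYPE('k::field) orient n I T" "I \<subseteq> {1..n}"
  shows "\<forall>i\<in>I. axis (e i) 1 \<in> zc (dimv e ` T)"
proof -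
  have T: "T \<subseteq> intervals n" "\<forall>X\<in>T. isupp X \<subseteq> I" "card T = card I"
     "\<forall>X\<in>T. \<forall>Y\<in>T. ext1_zero TYPE('k) orient n X Y"
    using assms(1) unfolding tilting_on_def by auto
  have "crules orient T" using tilting_crules[OF T(1) T(4)] .
  moreover have "finite I" using assms(2) finite_subset by blast
  ultimately show ?thesis using Ibound[where e=e and I=I and n=n and orient=orient] assms(2) T by auto
qed


lemma greedy_aux:
  fixes \<phi> \<psi> d :: "nat \<Rightarrow> real" and key :: "nat \<Rightarrow> int"
  assumes fin: "finite S" and inj: "inj_on key S"
    and bp: "\<forall>q\<in>S. 0 \<le> \<phi> q \<and> \<phi> q \<le> d q" and bq: "\<forall>q\<in>S. 0 \<le> \<psi> q \<and> \<psi> q \<le> d q"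
    and pp: "\<forall>q\<in>S. \<forall>q'\<in>S. 0 < \<phi> q' \<longrightarrow> key q < key q' \<longrightarrow> \<phi> q = d q"
    and sums: "sum \<phi> S = sum \<psi> S"
    and q0: "q0 \<in> S" "\<phi> q0 < \<psi> q0" and below: "\<forall>q\<in>S. key q < key q0 \<longrightarrow> \<phi> q = \<psi> q"
  shows False
proof -
  define L where "L = {q\<in>S. key q < key q0}"
  define R where "R = {q\<in>S. key q0 < key q}"
  have SU: "S = L \<union> ({q0} \<union> R)"
  proof -
    have "q \<in> L \<union> ({q0} \<union> R)" if "q \<in> S" for q
    proof (cases "key q = key q0")
      case True then have "q = q0" using inj q0(1) that by (meson inj_on_eq_iff)
      then show ?thesis by simp
    next
      case False then show ?thesis using that unfolding L_def R_def by auto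
    qed
    then show ?thesis using q0(1) unfolding L_def R_def by auto
  qed
  have disj: "L \<inter> ({q0} \<union> R) = {}" "{q0} \<inter> R = {}" unfolding L_def R_def by auto
  have finL: "finite L" "finite R" using fin unfolding L_def R_def by auto
  have "\<phi> q0 \<noteq> d q0" using q0 bq by fastforce
  then have R0: "\<forall>q\<in>R. \<phi> q = 0"
    using pp q0(1) bp unfolding R_def by (metis (no_types, lifting) less_eq_real_def mem_Collect_eq)
  have sL: "sum \<phi> L = sum \<psi> L" using below unfolding L_def by (intro sum.cong) auto
  have sR: "sum \<phi> R = 0" using R0 by simp
  have sR': "sum \<psi> R \<ge> 0" using bq unfolding R_def by (intro sum_nonneg) auto
  have "sum \<phi> S = sum \<phi> L + (\<phi> q0 + sum \<phi> R)"
    unfolding SU using finL disj by (simp add: sum.union_disjoint)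
  moreover have "sum \<psi> S = sum \<psi> L + (\<psi> q0 + sum \<psi> R)"
    unfolding SU using finL disj by (simp add: sum.union_disjoint)
  ultimately show False using sums sL sR sR' q0(2) by linarith
qed

lemma greedy:
  fixes \<phi> \<psi> d :: "nat \<Rightarrow> real" and key :: "nat \<Rightarrow> int"
  assumes fin: "finite S" and inj: "inj_on key S"
    and bp: "\<forall>q\<in>S. 0 \<le> \<phi> q \<and> \<phi> q \<le> d q" and bq: "\<forall>q\<in>S. 0 \<le> \<psi> q \<and> \<psi> q \<le> d q"
    and pp: "\<forall>q\<in>S. \<forall>q'\<in>S. 0 < \<phi> q' \<longrightarrow> key q < key q' \<longrightarrow> \<phi> q = d q"
    and pq: "\<forall>q\<in>S. \<forall>q'\<in>S. 0 < \<psi> q' \<longrightarrow> key q < key q' \<longrightarrow> \<psi> q = d q"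
    and sums: "sum \<phi> S = sum \<psi> S"
  shows "\<forall>q\<in>S. \<phi> q = \<psi> q"
proof (rule ccontr)
  assume nt: "\<not> (\<forall>q\<in>S. \<phi> q = \<psi> q)"
  define D where "D = {q\<in>S. \<phi> q \<noteq> \<psi> q}"
  have Dne: "D \<noteq> {}" and finD: "finite D" using nt fin unfolding D_def by auto
  define k0 where "k0 = Min (key ` D)"
  have "k0 \<in> key ` D" unfolding k0_def using Dne finD by (intro Min_in) auto
  then obtain q0 where q0: "q0 \<in> D" "key q0 = k0" by auto
  have minD: "\<And>q. q \<in> D \<Longrightarrow> k0 \<le> key q" unfolding k0_def using finD by auto
  have below: "\<forall>q\<in>S. key q < key q0 \<longrightarrow> \<phi> q = \<psi> q"
    using minD q0(2) unfolding D_def by force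
  have q0S: "q0 \<in> S" "\<phi> q0 \<noteq> \<psi> q0" using q0(1) unfolding D_def by auto
  show False
  proof (cases "\<phi> q0 < \<psi> q0")
    case True
    show False by (rule greedy_aux[OF fin inj bp bq pp sums q0S(1) True below])
  next
    case False
    then have "\<psi> q0 < \<phi> q0" using q0S(2) by simp
    moreover have "\<forall>q\<in>S. key q < key q0 \<longrightarrow> \<psi> q = \<phi> q" using below by simp
    ultimately show False using greedy_aux[OF fin inj bq bp pq sums[symmetric] q0S(1)] by blast
  qed
qed

definition net :: "interval set \<Rightarrow> (interval \<Rightarrow> real) \<Rightarrow> nat \<Rightarrow> real" where
  "net F a k = sum a {X\<in>F. snd X = k} - sum a {X\<in>F. fst X = Suc k}"

definition ysum :: "interval set \<Rightarrow> (interval \<Rightarrow> real) \<Rightarrow> nat \<Rightarrow> real" where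
  "ysum F a j = sum a {X\<in>F. j \<in> isupp X}"

lemma net_ysum:
  assumes "finite F" "\<forall>X\<in>F. fst X \<le> snd X"
  shows "net F a k = ysum F a k - ysum F a (Suc k)"
proof -
  have "\<And>P. sum a {X\<in>F. P X} = (\<Sum>X\<in>F. if P X then a X else 0)"
    using assms(1) by (simp add: sum.inter_filter)
  then have "ysum F a k - ysum F a (Suc k) = (\<Sum>X\<in>F. (if k \<in> isupp X then a X else 0) - (if Suc k \<in> isupp X then a X else 0))"
    and "net F a k = (\<Sum>X\<in>F. (if snd X = k then a X else 0) - (if fst X = Suc k then a X else 0))"
    unfolding ysum_def net_def by (simp_all add: sum_subtractf)
  moreover have "(if k \<in> isupp X then a X else 0) - (if Suc k \<in> isupp X then a X else 0)
      = (if snd X = k then a X else 0) - (if fst X = Suc k then a X else 0)" if "X \<in> F" for X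
    using assms(2) that unfolding isupp_def by auto
  ultimately show ?thesis by (metis (no_types, lifting) sum.cong)
qed

lemma src_iff:
  assumes fin: "finite F" and cr: "crules orient F" and pos: "\<forall>X\<in>F. 0 < a X"
  shows "(\<exists>X\<in>F. fst X = Suc k) \<longleftrightarrow> net F a k < 0"
proof
  assume "\<exists>X\<in>F. fst X = Suc k"
  then obtain X where X: "X \<in> F" "fst X = Suc k" by blast
  have e: "{Y\<in>F. snd Y = k} = {}" using crulesD(1)[OF cr _ X(1)] X(2) by auto
  have "sum a {Y\<in>F. fst Y = Suc k} > 0"
    using X fin pos by (intro sum_pos2[of _ X]) auto
  then show "net F a k < 0" unfolding net_def e by simp
next
  assume "net F a k < 0"
  moreover have "sum a {Y\<in>F. snd Y = k} \<ge> 0" using pos by (intro sum_nonneg) auto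
  ultimately have "0 < sum a {Y\<in>F. fst Y = Suc k}" unfolding net_def by linarith
  then have "{Y\<in>F. fst Y = Suc k} \<noteq> {}" by (metis less_irrefl sum.empty)
  then show "\<exists>X\<in>F. fst X = Suc k" by (metis (mono_tags, lifting) empty_Collect_eq)
qed

lemma fst_image_net:
  assumes fin: "finite F" and cr: "crules orient F" and pos: "\<forall>X\<in>F. 0 < a X"
    and iv: "\<forall>X\<in>F. 1 \<le> fst X"
  shows "fst ` F = Suc ` {k. net F a k < 0}"
proof
  show "fst ` F \<subseteq> Suc ` {k. net F a k < 0}"
  proof
    fix j assume "j \<in> fst ` F"
    then obtain X where X: "X \<in> F" "j = fst X" by auto
    then have "fst X = Suc (fst X - 1)" using iv by auto
    then have "net F a (fst X - 1) < 0" using src_iff[OF fin cr pos] X by blast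
    then show "j \<in> Suc ` {k. net F a k < 0}" using X \<open>fst X = Suc (fst X - 1)\<close> by auto
  qed
  show "Suc ` {k. net F a k < 0} \<subseteq> fst ` F"
    using src_iff[OF fin cr pos] by force
qed


lemma flow_props:
  fixes F :: "interval set" and a :: "interval \<Rightarrow> real" and phi :: "nat \<Rightarrow> real" and key :: "nat \<Rightarrow> int"
  assumes fin: "finite F" and sub: "F \<subseteq> intervals n" and cr: "crules orient F"
    and pos: "\<forall>X\<in>F. 0 < a X" and X0: "X0 \<in> F" "fst X0 = A" and Amax: "\<forall>X\<in>F. fst X \<le> A"
    and phi_eq: "phi = (\<lambda>q. if (A, q) \<in> F then a (A, q) else 0)"
    and key_eq: "key = (\<lambda>q. if orient q = orient (A - 1) \<and> q < n then int q else 2 * int n - int q)"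
  shows "\<forall>q\<in>{A..n}. 0 \<le> phi q \<and> phi q \<le> net F a q"
    and "sum phi {A..n} = - net F a (A - 1)"
    and "sum a {X\<in>F. fst X = A} = - net F a (A - 1)"
    and "\<forall>q\<in>{A..n}. \<forall>q'\<in>{A..n}. 0 < phi q' \<longrightarrow> key q < key q' \<longrightarrow> phi q = net F a q"
    and "\<forall>q. q \<notin> {A..n} \<longrightarrow> phi q = 0"
    and "inj_on key {A..n}"
proof -
  have phi_def: "\<And>q. phi q = (if (A, q) \<in> F then a (A, q) else 0)" using phi_eq by simp
  have key_def: "\<And>q. key q = (if orient q = orient (A - 1) \<and> q < n then int q else 2 * int n - int q)"
    using key_eq by simp
  have iv: "\<And>X. X \<in> F \<Longrightarrow> 1 \<le> fst X \<and> fst X \<le> snd X \<and> snd X \<le> n"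
    using sub unfolding intervals_def by auto
  have A1: "1 \<le> A" using iv[OF X0(1)] X0(2) by simp
  have nosrc: "{X\<in>F. fst X = Suc q} = {}" if "A \<le> q" for q
    using Amax that by fastforce
  have netq: "net F a q = sum a {X\<in>F. snd X = q}" if "A \<le> q" for q
    unfolding net_def nosrc[OF that] by simp
  have inA: "A \<le> q \<and> q \<le> n" if "(A, q) \<in> F" for q
    using iv[OF that] by simp
  show "\<forall>q\<in>{A..n}. 0 \<le> phi q \<and> phi q \<le> net F a q"
  proof
    fix q assume q: "q \<in> {A..n}"
    have nn: "0 \<le> sum a {X\<in>F. snd X = q}" using pos by (intro sum_nonneg) auto
    show "0 \<le> phi q \<and> phi q \<le> net F a q"
    proof (cases "(A, q) \<in> F")
      case True
      have "a (A, q) \<le> sum a {X\<in>F. snd X = q}"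
        using True fin pos by (intro member_le_sum) auto
      then show ?thesis using True pos netq[of q] q phi_def[of q] by auto
    next
      case False
      then show ?thesis using nn netq[of q] q phi_def[of q] by auto
    qed
  qed
  have e1: "{X\<in>F. snd X = A - 1} = {}"
  proof -
    have "Suc (snd X) \<noteq> A" if "X \<in> F" for X using crulesD(1)[OF cr that X0(1)] X0(2) by simp
    then show ?thesis using A1 by fastforce
  qed
  have netA: "net F a (A - 1) = - sum a {X\<in>F. fst X = A}"
    unfolding net_def e1 using A1 by simp
  then show "sum a {X\<in>F. fst X = A} = - net F a (A - 1)" by simp
  have img: "{X\<in>F. fst X = A} = (\<lambda>q. (A, q)) ` {q\<in>{A..n}. (A, q) \<in> F}"
  proof
    show "{X\<in>F. fst X = A} \<subseteq> (\<lambda>q. (A, q)) ` {q\<in>{A..n}. (A, q) \<in> F}"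
    proof
      fix X assume X: "X \<in> {X\<in>F. fst X = A}"
      then have "X = (A, snd X)" by (metis (mono_tags, lifting) mem_Collect_eq prod.collapse)
      moreover have "snd X \<in> {q\<in>{A..n}. (A, q) \<in> F}" using X iv[of X] calculation by auto
      ultimately show "X \<in> (\<lambda>q. (A, q)) ` {q\<in>{A..n}. (A, q) \<in> F}" by (rule image_eqI)
    qed
  qed auto
  have "sum a {X\<in>F. fst X = A} = sum (\<lambda>q. a (A, q)) {q\<in>{A..n}. (A, q) \<in> F}"
    unfolding img by (subst sum.reindex) (auto simp: inj_on_def)
  also have "\<dots> = sum (\<lambda>q. if (A, q) \<in> F then a (A, q) else 0) {A..n}"
    by (rule sum.inter_filter) simp
  also have "\<dots> = sum phi {A..n}" using phi_def by simp
  finally show "sum phi {A..n} = - net F a (A - 1)" using netA by simp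
  show "\<forall>q. q \<notin> {A..n} \<longrightarrow> phi q = 0" using inA phi_def by auto
  show "inj_on key {A..n}"
  proof (rule inj_onI)
    fix q q' assume q: "q \<in> {A..n}" "q' \<in> {A..n}" "key q = key q'"
    then show "q = q'" using key_def[of q] key_def[of q'] by (auto split: if_splits)
  qed
  show "\<forall>q\<in>{A..n}. \<forall>q'\<in>{A..n}. 0 < phi q' \<longrightarrow> key q < key q' \<longrightarrow> phi q = net F a q"
  proof (intro ballI impI)
    fix q q' assume q: "q \<in> {A..n}" "q' \<in> {A..n}" "0 < phi q'" "key q < key q'"
    have F2: "(A, q') \<in> F" using q(3) phi_def[of q'] by (auto split: if_splits)
    have only: "{X\<in>F. snd X = q} \<subseteq> {(A, q)}"
    proof
      fix X assume X: "X \<in> {X\<in>F. snd X = q}"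
      show "X \<in> {(A, q)}"
      proof (rule ccontr)
        assume "X \<notin> {(A, q)}"
        then have "fst X \<noteq> A" using X prod_eqI[of X "(A, q)"] by auto
        then have fX: "fst X < A" using Amax X by fastforce
        have XF: "X \<in> F" "snd X = q" using X by auto
        have "q \<noteq> q'" using q(4) by auto
        then consider "q < q'" | "q' < q" by linarith
        then show False
        proof cases
          case 1
          have "orient (A - 1) \<noteq> orient q"
            using crulesD(3)[OF cr XF(1) F2] fX q(1) 1 XF(2) by simp
          then have "key q = 2 * int n - int q" using key_def[of q] by auto
          moreover have "key q' \<le> 2 * int n - int q'"
            using key_def[of q'] q(2) by auto
          ultimately show False using q(4) 1 q(1,2) by auto
        next
          case 2
          have "orient (A - 1) = orient q'"
            using crulesD(2)[OF cr XF(1) F2] fX 2 XF(2) by simp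
          then have "key q' = int q'" using key_def[of q'] 2 q(1) by auto
          moreover have "key q \<ge> int q' + 1" using key_def[of q] 2 q(1) by auto
          ultimately show False using q(4) by simp
        qed
      qed
    qed
    show "phi q = net F a q"
    proof (cases "(A, q) \<in> F")
      case True
      then have "{X\<in>F. snd X = q} = {(A, q)}" using only by auto
      then show ?thesis using netq[of q] q(1) phi_def[of q] True by simp
    next
      case False
      then have e: "{X\<in>F. snd X = q} = {}" using only by auto
      have "net F a q = 0" using netq[of q] q(1) unfolding e by simp
      then show ?thesis using phi_def[of q] False by simp
    qed
  qed
qed


lemma net_remove:
  assumes fin: "finite F"
  shows "net {X\<in>F. fst X \<noteq> A} a k = net F a k - (if (A, k) \<in> F then a (A, k) else 0)
           + (if Suc k = A then sum a {X\<in>F. fst X = A} else 0)"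
proof -
  have s1: "sum a {X\<in>F. snd X = k} = sum a {X\<in>{X\<in>F. fst X \<noteq> A}. snd X = k} + (if (A, k) \<in> F then a (A, k) else 0)"
  proof -
    have U: "{X\<in>F. snd X = k} = {X\<in>{X\<in>F. fst X \<noteq> A}. snd X = k} \<union> {X\<in>F. snd X = k \<and> fst X = A}"
      by auto
    have D: "{X\<in>{X\<in>F. fst X \<noteq> A}. snd X = k} \<inter> {X\<in>F. snd X = k \<and> fst X = A} = {}" by auto
    have E: "{X\<in>F. snd X = k \<and> fst X = A} = (if (A, k) \<in> F then {(A, k)} else {})"
      by (auto simp: prod_eq_iff)
    show ?thesis unfolding U using fin D by (subst sum.union_disjoint) (auto simp: E)
  qed
  have s2: "sum a {X\<in>{X\<in>F. fst X \<noteq> A}. fst X = Suc k} = (if Suc k = A then 0 else sum a {X\<in>F. fst X = Suc k})"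
  proof (cases "Suc k = A")
    case True
    then have "{X\<in>{X\<in>F. fst X \<noteq> A}. fst X = Suc k} = {}" by auto
    then show ?thesis using True by simp
  next
    case False
    then have "{X\<in>{X\<in>F. fst X \<noteq> A}. fst X = Suc k} = {X\<in>F. fst X = Suc k}" by auto
    then show ?thesis using False by simp
  qed
  have s3: "Suc k = A \<Longrightarrow> {X\<in>F. fst X = Suc k} = {X\<in>F. fst X = A}" by auto
  show ?thesis unfolding net_def using s1 s2 s3 by auto
qed

lemma unique_flow:
  assumes "finite F" "F \<subseteq> intervals n" "crules orient F" "\<forall>X\<in>F. 0 < a X"
    "finite F'" "F' \<subseteq> intervals n" "crules orient F'" "\<forall>X\<in>F'. 0 < a' X"
    "\<forall>k. net F a k = net F' a' k"
  shows "F = F' \<and> (\<forall>X\<in>F. a X = a' X)"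
  using assms
proof (induction "card F" arbitrary: F F' a a' rule: less_induct)
  case less
  have fin: "finite F" and sub: "F \<subseteq> intervals n" and cr: "crules orient F" and pos: "\<forall>X\<in>F. 0 < a X"
    using less.prems by auto
  have fin': "finite F'" and sub': "F' \<subseteq> intervals n" and cr': "crules orient F'" and pos': "\<forall>X\<in>F'. 0 < a' X"
    using less.prems by auto
  have neteq: "\<And>k. net F a k = net F' a' k" using less.prems by auto
  have iv: "\<And>X. X \<in> F \<Longrightarrow> 1 \<le> fst X \<and> fst X \<le> snd X \<and> snd X \<le> n"
    using sub unfolding intervals_def by auto
  have iv': "\<And>X. X \<in> F' \<Longrightarrow> 1 \<le> fst X \<and> fst X \<le> snd X \<and> snd X \<le> n"
    using sub' unfolding intervals_def by auto
  have fimg: "fst ` F = fst ` F'"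
    using fst_image_net[OF fin cr pos] fst_image_net[OF fin' cr' pos'] iv iv' neteq by auto
  show ?case
  proof (cases "F = {}")
    case True
    then have "F' = {}" using fimg by auto
    then show ?thesis using True by simp
  next
    case Fne: False
    define A where "A = Max (fst ` F)"
    have "A \<in> fst ` F" unfolding A_def using fin Fne by (intro Max_in) auto
    then obtain X0 where X0: "X0 \<in> F" "fst X0 = A" by auto
    have "A \<in> fst ` F'" using \<open>A \<in> fst ` F\<close> fimg by simp
    then obtain X0' where X0': "X0' \<in> F'" "fst X0' = A" by auto
    have Amax: "\<forall>X\<in>F. fst X \<le> A" unfolding A_def using fin by auto
    have Amax': "\<forall>X\<in>F'. fst X \<le> A"
    proof
      fix X assume "X \<in> F'"
      then have "fst X \<in> fst ` F" using fimg by (metis imageI)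
      then show "fst X \<le> A" unfolding A_def using fin by simp
    qed
    define phi where "phi = (\<lambda>q. if (A, q) \<in> F then a (A, q) else 0)"
    define phi' where "phi' = (\<lambda>q. if (A, q) \<in> F' then a' (A, q) else 0)"
    define key where "key = (\<lambda>q. if orient q = orient (A - 1) \<and> q < n then int q else 2 * int n - int q)"
    note P1 = flow_props[OF fin sub cr pos X0 Amax phi_def key_def]
    note P' = flow_props[OF fin' sub' cr' pos' X0' Amax' phi'_def key_def]
    have P2: "\<forall>q\<in>{A..n}. 0 \<le> phi' q \<and> phi' q \<le> net F a q"
      "sum phi' {A..n} = - net F a (A - 1)"
      "sum a' {X\<in>F'. fst X = A} = - net F a (A - 1)"
      "\<forall>q\<in>{A..n}. \<forall>q'\<in>{A..n}. 0 < phi' q' \<longrightarrow> key q < key q' \<longrightarrow> phi' q = net F a q"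
      "\<forall>q. q \<notin> {A..n} \<longrightarrow> phi' q = 0"
      using P'(1) apply (simp only: neteq)
      using P'(2) apply (simp only: neteq)
      using P'(3) apply (simp only: neteq)
      using P'(4) apply (simp only: neteq)
      using P'(5) apply (simp only: neteq)
      done
    have sumeq: "sum phi {A..n} = sum phi' {A..n}" using P1(2) P2(2) by simp
    have "\<forall>q\<in>{A..n}. phi q = phi' q"
      by (rule greedy[OF finite_atLeastAtMost P1(6) P1(1) P2(1) P1(4) P2(4) sumeq])
    then have phieq: "\<And>q. phi q = phi' q" using P1(5) P2(5) by metis
    define F1 where "F1 = {X\<in>F. fst X \<noteq> A}"
    define F1' where "F1' = {X\<in>F'. fst X \<noteq> A}"
    have sA: "sum a {X\<in>F. fst X = A} = sum a' {X\<in>F'. fst X = A}" using P1(3) P2(3) by simp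
    have net1: "net F1 a k = net F1' a' k" for k
    proof -
      have "(if (A, k) \<in> F then a (A, k) else 0) = (if (A, k) \<in> F' then a' (A, k) else 0)"
        using phieq[of k] unfolding phi_def phi'_def by simp
      then show ?thesis
        unfolding F1_def F1'_def net_remove[OF fin] net_remove[OF fin'] neteq[of k] sA by simp
    qed
    have "F1 \<subseteq> F" "X0 \<notin> F1" unfolding F1_def using X0 by auto
    then have "F1 \<subset> F" using X0(1) by blast
    then have cF1: "card F1 < card F" using fin by (rule psubset_card_mono[rotated])
    have fin1: "finite F1" "finite F1'" unfolding F1_def F1'_def using fin fin' by auto
    have sub1: "F1 \<subseteq> intervals n" "F1' \<subseteq> intervals n" unfolding F1_def F1'_def using sub sub' by auto
    have cr1: "crules orient F1" "crules orient F1'" unfolding F1_def F1'_def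
      by (rule crules_mono[OF cr], simp, rule crules_mono[OF cr'], simp)
    have pos1: "\<forall>X\<in>F1. 0 < a X" "\<forall>X\<in>F1'. 0 < a' X" unfolding F1_def F1'_def using pos pos' by auto
    have IH: "F1 = F1' \<and> (\<forall>X\<in>F1. a X = a' X)"
      by (rule less.hyps[OF cF1 fin1(1) sub1(1) cr1(1) pos1(1) fin1(2) sub1(2) cr1(2) pos1(2)])
         (use net1 in blast)
    have memA: "X \<in> F \<longleftrightarrow> X \<in> F'" if "fst X = A" for X
    proof -
      have X: "X = (A, snd X)" using that by (metis prod.collapse)
      have "X \<in> F \<longleftrightarrow> 0 < phi (snd X)" using pos X unfolding phi_def by (metis less_irrefl)
      also have "\<dots> \<longleftrightarrow> 0 < phi' (snd X)" using phieq by simp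
      also have "\<dots> \<longleftrightarrow> X \<in> F'" using pos' X unfolding phi'_def by (metis less_irrefl)
      finally show ?thesis .
    qed
    have FF: "F = F'"
    proof
      show "F \<subseteq> F'"
      proof
        fix X assume X: "X \<in> F"
        show "X \<in> F'"
        proof (cases "fst X = A")
          case True then show ?thesis using memA X by blast
        next
          case False then have "X \<in> F1" using X unfolding F1_def by simp
          then show ?thesis using IH unfolding F1'_def by auto
        qed
      qed
      show "F' \<subseteq> F"
      proof
        fix X assume X: "X \<in> F'"
        show "X \<in> F"
        proof (cases "fst X = A")
          case True then show ?thesis using memA X by blast
        next
          case False then have "X \<in> F1'" using X unfolding F1'_def by simp
          then show ?thesis using IH unfolding F1_def by auto
        qed
      qed
    qed
    have "\<forall>X\<in>F. a X = a' X"
    proof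
      fix X assume X: "X \<in> F"
      show "a X = a' X"
      proof (cases "fst X = A")
        case True
        have XX: "X = (A, snd X)" using True by (metis prod.collapse)
        then have "a X = phi (snd X)" using X unfolding phi_def by (metis)
        also have "\<dots> = phi' (snd X)" using phieq by simp
        also have "\<dots> = a' X" using X FF XX unfolding phi'_def by (metis)
        finally show ?thesis .
      next
        case False then have "X \<in> F1" using X unfolding F1_def by simp
        then show ?thesis using IH by auto
      qed
    qed
    then show ?thesis using FF by simp
  qed
qed


definition Pos :: "(real^'n::finite) set \<Rightarrow> (real^'n) set" where
  "Pos W = {x. \<exists>c. (\<forall>w\<in>W. 0 < c w) \<and> x = (\<Sum>w\<in>W. c w *\<^sub>R w)}"

lemma family_measure:
  fixes W :: "'a \<Rightarrow> (real^'n::finite) set" and \<T> :: "'a set"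
  assumes fin: "finite \<T>"
    and props: "\<And>T. T \<in> \<T> \<Longrightarrow> finite (W T) \<and> card (W T) = CARD('n) \<and>
         (\<forall>w\<in>W T. \<forall>i. w$i \<in> \<int>) \<and> (\<forall>k. axis k 1 \<in> zc (W T))"
    and disj: "\<And>T T'. T \<in> \<T> \<Longrightarrow> T' \<in> \<T> \<Longrightarrow> Pos (W T) \<inter> Pos (W T') \<noteq> {} \<Longrightarrow> T = T'"
  shows "measure lborel (\<Union>T\<in>\<T>. convex hull (insert 0 (W T))) = real (card \<T>) / fact CARD('n)"
proof -
  let ?s = "\<lambda>T. convex hull (insert 0 (W T))"
  have meas: "?s T \<in> lmeasurable \<and> measure lebesgue (?s T) = 1 / fact CARD('n)" if "T \<in> \<T>" for T
    using simplex_measure[of "W T"] props[OF that] by blast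
  have cover: "\<exists>N. negligible N \<and> ?s T \<subseteq> N \<union> Pos (W T)" if "T \<in> \<T>" for T
    using simplex_cover[of "W T"] props[OF that] unfolding Pos_def by auto
  have pw: "pairwise (\<lambda>T T'. negligible (?s T \<inter> ?s T')) \<T>"
  proof (rule pairwiseI)
    fix T T' assume T: "T \<in> \<T>" "T' \<in> \<T>" "T \<noteq> T'"
    obtain N where N: "negligible N" "?s T \<subseteq> N \<union> Pos (W T)" using cover[OF T(1)] by blast
    obtain N' where N': "negligible N'" "?s T' \<subseteq> N' \<union> Pos (W T')" using cover[OF T(2)] by blast
    have "Pos (W T) \<inter> Pos (W T') = {}" using disj T by blast
    then have "?s T \<inter> ?s T' \<subseteq> N \<union> N'" using N(2) N'(2) by blast
    moreover have "negligible (N \<union> N')" using N(1) N'(1) by simp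
    ultimately show "negligible (?s T \<inter> ?s T')" by (rule negligible_subset[rotated])
  qed
  have "measure lebesgue (\<Union>T\<in>\<T>. ?s T) = (\<Sum>T\<in>\<T>. measure lebesgue (?s T))"
    using measure_negligible_finite_Union_image[OF fin _ pw] meas by blast
  also have "\<dots> = real (card \<T>) / fact CARD('n)" using meas by simp
  finally have L: "measure lebesgue (\<Union>T\<in>\<T>. ?s T) = real (card \<T>) / fact CARD('n)" .
  have "compact (\<Union>T\<in>\<T>. ?s T)"
    using fin props by (intro compact_UN finite_imp_compact_convex_hull) auto
  then have "(\<Union>T\<in>\<T>. ?s T) \<in> sets lborel" by (auto dest: compact_imp_closed)
  then show ?thesis using L by simp
qed


lemma isupp_sub: "X \<in> intervals n \<Longrightarrow> isupp X \<subseteq> {1..n}"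
  unfolding intervals_def isupp_def by auto

lemma dimv_comp:
  assumes inj: "inj_on e {1..n}" and X: "X \<in> intervals n" and j: "j \<in> {1..n}"
  shows "dimv e X $ e j = (if j \<in> isupp X then 1 else 0)"
proof -
  have "dimv e X $ e j = (\<Sum>i\<in>isupp X. (if i = j then 1 else 0))"
    unfolding dimv_def sum_component
  proof (intro sum.cong refl)
    fix i assume "i \<in> isupp X"
    then have "i \<in> {1..n}" using isupp_sub[OF X] by auto
    then have "(e j = e i) = (i = j)" using inj j by (auto dest: inj_onD)
    then show "axis (e i) 1 $ e j = (if i = j then 1 else 0)" by (simp add: axis_def)
  qed
  also have "\<dots> = (if j \<in> isupp X then 1 else 0)"
    by (simp add: isupp_def)
  finally show ?thesis .
qed

lemma dimv_int: "dimv e X $ k \<in> \<int>"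
  unfolding dimv_def sum_component by (intro Ints_sum) (auto simp: axis_def)

lemma dimv_inj:
  assumes inj: "inj_on e {1..n}"
  shows "inj_on (dimv e) (intervals n)"
proof (rule inj_onI)
  fix X Y assume X: "X \<in> intervals n" and Y: "Y \<in> intervals n" and eq: "dimv e X = dimv e Y"
  have "j \<in> isupp X \<longleftrightarrow> j \<in> isupp Y" if "j \<in> {1..n}" for j
    using dimv_comp[OF inj X that] dimv_comp[OF inj Y that] eq by (auto split: if_splits)
  then have "isupp X = isupp Y" using isupp_sub[OF X] isupp_sub[OF Y] by blast
  moreover have "fst X \<le> snd X" "fst Y \<le> snd Y" using X Y unfolding intervals_def by auto
  ultimately have "fst X = fst Y" "snd X = snd Y" unfolding isupp_def by auto
  then show "X = Y" by (simp add: prod_eq_iff)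
qed

lemma dimv_fst:
  assumes inj: "inj_on e {1..n}" and X: "X \<in> intervals n"
  shows "dimv e X $ e (fst X) = 1"
proof -
  have "fst X \<in> {1..n}" "fst X \<in> isupp X" using X unfolding intervals_def isupp_def by auto
  then show ?thesis using dimv_comp[OF inj X] by simp
qed

lemma dimv_nonneg: "dimv e X $ k \<ge> 0"
  unfolding dimv_def sum_component by (intro sum_nonneg) (auto simp: axis_def)

lemma combo_comp:
  assumes inj: "inj_on e {1..n}" and fin: "finite T" and T: "T \<subseteq> intervals n" and j: "j \<in> {1..n}"
  shows "(\<Sum>X\<in>T. a X *\<^sub>R dimv e X) $ e j = ysum T a j"
proof -
  have "(\<Sum>X\<in>T. a X *\<^sub>R dimv e X) $ e j = (\<Sum>X\<in>T. if j \<in> isupp X then a X else 0)"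
    unfolding sum_component using dimv_comp[OF inj _ j] T by (intro sum.cong) auto
  also have "\<dots> = ysum T a j" unfolding ysum_def using fin by (simp add: sum.inter_filter)
  finally show ?thesis .
qed

lemma ysum_out:
  assumes "T \<subseteq> intervals n" "j \<notin> {1..n}"
  shows "ysum T a j = 0"
proof -
  have e: "{X\<in>T. j \<in> isupp X} = {}" using assms isupp_sub by blast
  show ?thesis unfolding ysum_def e by simp
qed

lemma ysum_zero:
  assumes "\<forall>X\<in>T. j \<notin> isupp X"
  shows "ysum T a j = 0"
proof -
  have e: "{X\<in>T. j \<in> isupp X} = {}" using assms by blast
  show ?thesis unfolding ysum_def e by simp
qed

lemma ysum_nonneg:
  assumes "\<forall>X\<in>T. 0 < a X"
  shows "ysum T a j \<ge> 0"
  unfolding ysum_def using assms by (intro sum_nonneg) auto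

lemma ysum_unique:
  assumes "finite T" "T \<subseteq> intervals n" "crules orient T" "\<forall>X\<in>T. 0 < a X"
    "finite T'" "T' \<subseteq> intervals n" "crules orient T'" "\<forall>X\<in>T'. 0 < a' X"
    "\<forall>j\<in>{1..n}. ysum T a j = ysum T' a' j"
  shows "T = T'"
proof -
  have yall: "ysum T a j = ysum T' a' j" for j
    using assms(9) ysum_out[OF assms(2)] ysum_out[OF assms(6)] by (cases "j \<in> {1..n}") auto
  have le: "\<forall>X\<in>T. fst X \<le> snd X" "\<forall>X\<in>T'. fst X \<le> snd X"
    using assms(2,6) unfolding intervals_def by auto
  have "\<forall>k. net T a k = net T' a' k"
    using net_ysum[OF assms(1) le(1)] net_ysum[OF assms(5) le(2)] yall by simp
  then show ?thesis using unique_flow[OF assms(1-8)] by blast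
qed

lemma pos_reindex:
  assumes "inj_on f A" "x \<in> Pos (f ` A)"
  shows "\<exists>a. (\<forall>X\<in>A. 0 < a X) \<and> x = (\<Sum>X\<in>A. a X *\<^sub>R f X)"
proof -
  obtain c where c: "\<forall>w\<in>f ` A. 0 < c w" "x = (\<Sum>w\<in>f ` A. c w *\<^sub>R w)"
    using assms(2) unfolding Pos_def by blast
  have "x = (\<Sum>X\<in>A. c (f X) *\<^sub>R f X)" using c(2) sum.reindex[OF assms(1)] by (simp add: o_def)
  then show ?thesis using c(1) by (intro exI[of _ "\<lambda>X. c (f X)"]) auto
qed

lemma pos_union:
  assumes fin: "finite A" "finite B" and d: "A \<inter> B = {}" and x: "x \<in> Pos (A \<union> B)"
  shows "\<exists>x1 x2. x1 \<in> Pos A \<and> x2 \<in> Pos B \<and> x = x1 + x2"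
proof -
  obtain c where c: "\<forall>w\<in>A \<union> B. 0 < c w" "x = (\<Sum>w\<in>A \<union> B. c w *\<^sub>R w)"
    using x unfolding Pos_def by blast
  have "x = (\<Sum>w\<in>A. c w *\<^sub>R w) + (\<Sum>w\<in>B. c w *\<^sub>R w)" using c(2) fin d by (simp add: sum.union_disjoint)
  moreover have "(\<Sum>w\<in>A. c w *\<^sub>R w) \<in> Pos A" "(\<Sum>w\<in>B. c w *\<^sub>R w) \<in> Pos B"
    unfolding Pos_def using c(1) by blast+
  ultimately show ?thesis by blast
qed

lemma zc_neg:
  fixes S :: "(real^'n::finite) set"
  assumes "finite S"
  shows "zc S \<subseteq> zc (uminus ` S)"
proof
  fix v assume "v \<in> zc S"
  then obtain c where c: "v = (\<Sum>w\<in>S. real_of_int (c w) *\<^sub>R w)" unfolding zc_def by blast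
  have inj: "inj_on uminus S" by (simp add: inj_on_def)
  have "(\<Sum>u\<in>uminus ` S. real_of_int (- c (- u)) *\<^sub>R u) = (\<Sum>w\<in>S. real_of_int (- c (- (- w))) *\<^sub>R (- w))"
    by (subst sum.reindex[OF inj]) (simp add: o_def)
  also have "\<dots> = v" using c by simp
  finally show "v \<in> zc (uminus ` S)" unfolding zc_def
    by (intro CollectI exI[of _ "\<lambda>u. - c (- u)"]) simp
qed


lemma bij_facts:
  assumes bij: "bij_betw e {1..n} (UNIV :: 'n::finite set)"
  shows "inj_on e {1..n}" "\<And>k. \<exists>j\<in>{1..n}. k = e j" "CARD('n) = n"
  using bij unfolding bij_betw_def apply blast
  using bij unfolding bij_betw_def apply blast
  using bij_betw_same_card[OF bij] by simp

lemma tilt_finite: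
  "finite (tilt_plus TYPE('k::field) orient n)" "finite (tilt_clus TYPE('k) orient n)"
  "finite (tilt_two TYPE('k) orient n)"
proof -
  have "tilt_plus TYPE('k) orient n \<subseteq> Pow (intervals n)"
    unfolding tilt_plus_def tilting_on_def by auto
  then show "finite (tilt_plus TYPE('k::field) orient n)"
    using intervals_finite by (meson finite_Pow_iff finite_subset)
  have "tilt_clus TYPE('k) orient n \<subseteq> Pow (intervals n)"
    unfolding tilt_clus_def tilting_on_def by auto
  then show "finite (tilt_clus TYPE('k::field) orient n)"
    using intervals_finite by (meson finite_Pow_iff finite_subset)
  have "tilt_two TYPE('k) orient n \<subseteq> Pow (intervals n) \<times> Pow (intervals n)"
    unfolding tilt_two_def tilting_on_def by auto
  then show "finite (tilt_two TYPE('k::field) orient n)"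
    using intervals_finite by (meson finite_Pow_iff finite_SigmaI finite_subset)
qed

lemma tilting_basic:
  assumes "tilting_on TYPE('k::field) orient n I T"
  shows "T \<subseteq> intervals n" "finite T" "crules orient T" "card T = card I" "\<forall>X\<in>T. isupp X \<subseteq> I"
proof -
  show T: "T \<subseteq> intervals n" using assms unfolding tilting_on_def by auto
  then show "finite T" using intervals_finite finite_subset by blast
  show "crules orient T" using assms tilting_crules[OF T, where orient=orient] unfolding tilting_on_def by auto
  show "card T = card I" "\<forall>X\<in>T. isupp X \<subseteq> I" using assms unfolding tilting_on_def by auto
qed

lemma plus_case:
  assumes bij: "bij_betw e {1..n} (UNIV :: 'n::finite set)"
  shows "measure lborel (P_plus TYPE('k::field) orient n e) = real (card (tilt_plus TYPE('k) orient n)) / fact n"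
proof -
  note B = bij_facts[OF bij]
  have "measure lborel (\<Union>T\<in>tilt_plus TYPE('k) orient n. convex hull (insert 0 (dimv e ` T)))
      = real (card (tilt_plus TYPE('k) orient n)) / fact CARD('n)"
  proof (rule family_measure[OF tilt_finite(1)])
    fix T assume T: "T \<in> tilt_plus TYPE('k) orient n"
    then have tl: "tilting_on TYPE('k) orient n {1..n} T" unfolding tilt_plus_def by simp
    note tb = tilting_basic[OF tl]
    have inj: "inj_on (dimv e) T" using dimv_inj[OF B(1)] tb(1) inj_on_subset by blast
    have "card (dimv e ` T) = CARD('n)" using card_image[OF inj] tb(4) B(3) by simp
    moreover have "\<forall>k. axis k 1 \<in> zc (dimv e ` T)"
    proof
      fix k obtain j where j: "j \<in> {1..n}" "k = e j" using B(2) by blast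
      then show "axis k 1 \<in> zc (dimv e ` T)" using tilting_zspan[OF tl, of e] by simp
    qed
    ultimately show "finite (dimv e ` T) \<and> card (dimv e ` T) = CARD('n) \<and>
         (\<forall>w\<in>dimv e ` T. \<forall>i. w$i \<in> \<int>) \<and> (\<forall>k. axis k 1 \<in> zc (dimv e ` T))"
      using tb(2) dimv_int by auto
  next
    fix T T' assume T: "T \<in> tilt_plus TYPE('k) orient n" and T': "T' \<in> tilt_plus TYPE('k) orient n"
      and ne: "Pos (dimv e ` T) \<inter> Pos (dimv e ` T') \<noteq> {}"
    then obtain x where x: "x \<in> Pos (dimv e ` T)" "x \<in> Pos (dimv e ` T')" by blast
    have tl: "tilting_on TYPE('k) orient n {1..n} T" using T unfolding tilt_plus_def by simp
    have tl': "tilting_on TYPE('k) orient n {1..n} T'" using T' unfolding tilt_plus_def by simp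
    note tb = tilting_basic[OF tl] and tb' = tilting_basic[OF tl']
    obtain a where a: "\<forall>X\<in>T. 0 < a X" "x = (\<Sum>X\<in>T. a X *\<^sub>R dimv e X)"
      using pos_reindex[OF inj_on_subset[OF dimv_inj[OF B(1)] tb(1)] x(1)] by blast
    obtain a' where a': "\<forall>X\<in>T'. 0 < a' X" "x = (\<Sum>X\<in>T'. a' X *\<^sub>R dimv e X)"
      using pos_reindex[OF inj_on_subset[OF dimv_inj[OF B(1)] tb'(1)] x(2)] by blast
    have "\<forall>j\<in>{1..n}. ysum T a j = ysum T' a' j"
      using combo_comp[OF B(1) tb(2) tb(1)] combo_comp[OF B(1) tb'(2) tb'(1)] a(2) a'(2) by metis
    then show "T = T'" using ysum_unique[OF tb(2,1,3) a(1) tb'(2,1,3) a'(1)] by blast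
  qed
  then show ?thesis unfolding P_plus_def sigma_plus_def B(3) .
qed


lemma msupp_sub: "T \<subseteq> intervals n \<Longrightarrow> msupp T \<subseteq> {1..n}"
  unfolding msupp_def using isupp_sub by blast

lemma axis_neg_comp:
  assumes inj: "inj_on e {1..n}" "i \<in> {1..n}" "j \<in> {1..n}"
  shows "(- axis (e i) (1::real)) $ e j = (if i = j then -1 else 0)"
  using assms by (auto simp: axis_def dest: inj_onD)

lemma axis_comp:
  assumes inj: "inj_on e {1..n}" "i \<in> {1..n}" "j \<in> {1..n}"
  shows "axis (e i) (1::real) $ e j = (if i = j then 1 else 0)"
  using assms by (auto simp: axis_def dest: inj_onD)

lemma clus_y:
  assumes inj: "inj_on e {1..n}" and T: "T \<in> tilt_clus TYPE('k::field) orient n"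
    and x: "x \<in> Pos (dimv e ` T \<union> (\<lambda>j. - axis (e j) 1) ` ({1..n} - msupp T))"
  shows "\<exists>a. (\<forall>X\<in>T. 0 < a X) \<and> (\<forall>j\<in>{1..n}. ysum T a j = max 0 (x $ e j))"
proof -
  have tl: "tilting_on TYPE('k) orient n (msupp T) T" using T unfolding tilt_clus_def by simp
  note tb = tilting_basic[OF tl]
  define J where "J = {1..n} - msupp T"
  define neg :: "nat \<Rightarrow> real^'a" where "neg = (\<lambda>j. - axis (e j) 1)"
  have injd: "inj_on (dimv e) T" using dimv_inj[OF inj] tb(1) inj_on_subset by blast
  have injn: "inj_on neg J"
    unfolding neg_def J_def by (rule inj_onI) (use inj in \<open>auto simp: axis_eq_axis dest: inj_onD\<close>)
  have disj: "dimv e ` T \<inter> neg ` J = {}"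
  proof (rule ccontr)
    assume "dimv e ` T \<inter> neg ` J \<noteq> {}"
    then obtain X j where X: "X \<in> T" "j \<in> J" "dimv e X = neg j" by blast
    have "dimv e X $ e (fst X) = 1" using dimv_fst[OF inj] X tb(1) by blast
    moreover have "neg j $ e (fst X) \<le> 0" unfolding neg_def by (simp add: axis_def)
    ultimately show False using X(3) by simp
  qed
  obtain x1 x2 where xx: "x1 \<in> Pos (dimv e ` T)" "x2 \<in> Pos (neg ` J)" "x = x1 + x2"
    using pos_union[OF _ _ disj] x tb(2) unfolding J_def neg_def by blast
  obtain a where a: "\<forall>X\<in>T. 0 < a X" "x1 = (\<Sum>X\<in>T. a X *\<^sub>R dimv e X)"
    using pos_reindex[OF injd xx(1)] by blast
  obtain b where b: "\<forall>j\<in>J. 0 < b j" "x2 = (\<Sum>j\<in>J. b j *\<^sub>R neg j)"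
    using pos_reindex[OF injn xx(2)] by blast
  have x2c: "x2 $ e j = (if j \<in> J then - b j else 0)" if j: "j \<in> {1..n}" for j
  proof -
    have "x2 $ e j = (\<Sum>i\<in>J. if i = j then - b i else 0)"
      unfolding b(2) sum_component
    proof (intro sum.cong refl)
      fix i assume "i \<in> J"
      then have "i \<in> {1..n}" unfolding J_def by auto
      then show "(b i *\<^sub>R neg i) $ e j = (if i = j then - b i else 0)"
        unfolding neg_def using axis_comp[OF inj \<open>i \<in> {1..n}\<close> j] by simp
    qed
    also have "\<dots> = (if j \<in> J then - b j else 0)"
      unfolding J_def by simp
    finally show ?thesis .
  qed
  have "\<forall>j\<in>{1..n}. ysum T a j = max 0 (x $ e j)"
  proof
    fix j assume j: "j \<in> {1..n}"
    have xj: "x $ e j = ysum T a j + x2 $ e j"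
      using xx(3) combo_comp[OF inj tb(2) tb(1) j, of a] a(2) by simp
    show "ysum T a j = max 0 (x $ e j)"
    proof (cases "j \<in> J")
      case True
      then have "\<forall>X\<in>T. j \<notin> isupp X" unfolding J_def msupp_def by auto
      then have "ysum T a j = 0" by (rule ysum_zero)
      moreover have "x $ e j < 0" using xj x2c[OF j] True b(1) calculation by simp
      ultimately show ?thesis by simp
    next
      case False
      then have "x $ e j = ysum T a j" using xj x2c[OF j] by simp
      then show ?thesis using ysum_nonneg[OF a(1), of j] by simp
    qed
  qed
  then show ?thesis using a(1) by blast
qed

lemma clus_case:
  assumes bij: "bij_betw e {1..n} (UNIV :: 'n::finite set)"
  shows "measure lborel (P_clus TYPE('k::field) orient n e) = real (card (tilt_clus TYPE('k) orient n)) / fact n"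
proof -
  note B = bij_facts[OF bij]
  let ?W = "\<lambda>T. dimv e ` T \<union> (\<lambda>j. - axis (e j) 1) ` ({1..n} - msupp T)"
  have "measure lborel (\<Union>T\<in>tilt_clus TYPE('k) orient n. convex hull (insert 0 (?W T)))
      = real (card (tilt_clus TYPE('k) orient n)) / fact CARD('n)"
  proof (rule family_measure[OF tilt_finite(2)])
    fix T assume T: "T \<in> tilt_clus TYPE('k) orient n"
    then have tl: "tilting_on TYPE('k) orient n (msupp T) T" unfolding tilt_clus_def by simp
    note tb = tilting_basic[OF tl]
    define J where "J = {1..n} - msupp T"
    define neg :: "nat \<Rightarrow> real^'n" where "neg = (\<lambda>j. - axis (e j) 1)"
    have W: "?W T = dimv e ` T \<union> neg ` J" unfolding J_def neg_def by simp
    have ms: "msupp T \<subseteq> {1..n}" using msupp_sub[OF tb(1)] .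
    have injd: "inj_on (dimv e) T" using dimv_inj[OF B(1)] tb(1) inj_on_subset by blast
    have injn: "inj_on neg J"
      unfolding neg_def J_def by (rule inj_onI) (use B(1) in \<open>auto simp: axis_eq_axis dest: inj_onD\<close>)
    have disj: "dimv e ` T \<inter> neg ` J = {}"
    proof (rule ccontr)
      assume "dimv e ` T \<inter> neg ` J \<noteq> {}"
      then obtain X j where X: "X \<in> T" "j \<in> J" "dimv e X = neg j" by blast
      have "dimv e X $ e (fst X) = 1" using dimv_fst[OF B(1)] X tb(1) by blast
      moreover have "neg j $ e (fst X) \<le> 0" unfolding neg_def by (simp add: axis_def)
      ultimately show False using X(3) by simp
    qed
    have finJ: "finite J" unfolding J_def by simp
    have "card (?W T) = card T + card J"
      unfolding W using card_Un_disjoint[OF _ _ disj] card_image[OF injd] card_image[OF injn] tb(2) finJ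
      by simp
    also have "\<dots> = card (msupp T) + card ({1..n} - msupp T)" using tb(4) unfolding J_def by simp
    also have "\<dots> = n" using ms card_Diff_subset[of "msupp T" "{1..n}"] finite_subset[OF ms]
      card_mono[OF finite_atLeastAtMost ms] by simp
    finally have cW: "card (?W T) = CARD('n)" using B(3) by simp
    have ints: "\<forall>w\<in>?W T. \<forall>i. w$i \<in> \<int>" using dimv_int by (auto simp: axis_def)
    have zs: "\<forall>k. axis k 1 \<in> zc (?W T)"
    proof
      fix k obtain j where j: "j \<in> {1..n}" "k = e j" using B(2) by blast
      have finW: "finite (?W T)" using tb(2) by simp
      show "axis k 1 \<in> zc (?W T)"
      proof (cases "j \<in> msupp T")
        case True
        then have "axis k 1 \<in> zc (dimv e ` T)" using tilting_zspan[OF tl ms, of e] j by simp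
        then show ?thesis using zc_mono[OF finW, of "dimv e ` T"] by blast
      next
        case False
        then have "- axis k 1 \<in> ?W T" using j by auto
        then have "- (- axis k 1) \<in> zc (?W T)" using zc_uminus zc_base[OF finW] by blast
        then show ?thesis by simp
      qed
    qed
    show "finite (?W T) \<and> card (?W T) = CARD('n) \<and> (\<forall>w\<in>?W T. \<forall>i. w$i \<in> \<int>) \<and> (\<forall>k. axis k 1 \<in> zc (?W T))"
      using tb(2) cW ints zs by simp
  next
    fix T T' assume T: "T \<in> tilt_clus TYPE('k) orient n" and T': "T' \<in> tilt_clus TYPE('k) orient n"
      and ne: "Pos (?W T) \<inter> Pos (?W T') \<noteq> {}"
    then obtain x where x: "x \<in> Pos (?W T)" "x \<in> Pos (?W T')" by blast
    have tl: "tilting_on TYPE('k) orient n (msupp T) T" using T unfolding tilt_clus_def by simp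
    have tl': "tilting_on TYPE('k) orient n (msupp T') T'" using T' unfolding tilt_clus_def by simp
    note tb = tilting_basic[OF tl] and tb' = tilting_basic[OF tl']
    obtain a where a: "\<forall>X\<in>T. 0 < a X" "\<forall>j\<in>{1..n}. ysum T a j = max 0 (x $ e j)"
      using clus_y[OF B(1) T x(1)] by blast
    obtain a' where a': "\<forall>X\<in>T'. 0 < a' X" "\<forall>j\<in>{1..n}. ysum T' a' j = max 0 (x $ e j)"
      using clus_y[OF B(1) T' x(2)] by blast
    show "T = T'" using ysum_unique[OF tb(2,1,3) a(1) tb'(2,1,3) a'(1)] a(2) a'(2) by simp
  qed
  then show ?thesis unfolding P_clus_def sigma_clus_def B(3) .
qed


lemma two_y:
  assumes inj: "inj_on e {1..n}" and TT: "(Tp, Tm) \<in> tilt_two TYPE('k::field) orient n"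
    and x: "x \<in> Pos (dimv e ` Tp \<union> (\<lambda>Y. - dimv e Y) ` Tm)"
  shows "\<exists>a b. (\<forall>X\<in>Tp. 0 < a X) \<and> (\<forall>Y\<in>Tm. 0 < b Y) \<and>
     (\<forall>j\<in>{1..n}. ysum Tp a j = max 0 (x $ e j) \<and> ysum Tm b j = max 0 (- (x $ e j)))"
proof -
  obtain I where I: "I \<subseteq> {1..n}" "tilting_on TYPE('k) orient n I Tp"
    "tilting_on TYPE('k) orient n ({1..n} - I) Tm"
    using TT unfolding tilt_two_def by blast
  note tp = tilting_basic[OF I(2)] and tm = tilting_basic[OF I(3)]
  define negd :: "interval \<Rightarrow> real^'a" where "negd = (\<lambda>Y. - dimv e Y)"
  have injd: "inj_on (dimv e) Tp" using dimv_inj[OF inj] tp(1) inj_on_subset by blast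
  have injm: "inj_on (dimv e) Tm" using dimv_inj[OF inj] tm(1) inj_on_subset by blast
  have injn: "inj_on negd Tm"
  proof (rule inj_onI)
    fix Y Y' assume "Y \<in> Tm" "Y' \<in> Tm" "negd Y = negd Y'"
    then show "Y = Y'" using inj_onD[OF injm] unfolding negd_def by simp
  qed
  have disj: "dimv e ` Tp \<inter> negd ` Tm = {}"
  proof (rule ccontr)
    assume "dimv e ` Tp \<inter> negd ` Tm \<noteq> {}"
    then obtain X Y where X: "X \<in> Tp" "Y \<in> Tm" "dimv e X = negd Y" by blast
    have "dimv e X $ e (fst X) = 1" using dimv_fst[OF inj] X tp(1) by blast
    moreover have "negd Y $ e (fst X) \<le> 0" unfolding negd_def using dimv_nonneg[of e Y] by simp
    ultimately show False using X(3) by simp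
  qed
  obtain x1 x2 where xx: "x1 \<in> Pos (dimv e ` Tp)" "x2 \<in> Pos (negd ` Tm)" "x = x1 + x2"
  proof -
    have f1: "finite (dimv e ` Tp)" "finite (negd ` Tm)" using tp(2) tm(2) by auto
    have "x \<in> Pos (dimv e ` Tp \<union> negd ` Tm)" using x unfolding negd_def .
    then show ?thesis using pos_union[OF f1 disj] that by blast
  qed
  obtain a where a: "\<forall>X\<in>Tp. 0 < a X" "x1 = (\<Sum>X\<in>Tp. a X *\<^sub>R dimv e X)"
    using pos_reindex[OF injd xx(1)] by blast
  obtain b where b: "\<forall>Y\<in>Tm. 0 < b Y" "x2 = (\<Sum>Y\<in>Tm. b Y *\<^sub>R negd Y)"
    using pos_reindex[OF injn xx(2)] by blast
  have x2': "x2 = - (\<Sum>Y\<in>Tm. b Y *\<^sub>R dimv e Y)" unfolding b(2) negd_def by (simp add: sum_negf)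
  have "\<forall>j\<in>{1..n}. ysum Tp a j = max 0 (x $ e j) \<and> ysum Tm b j = max 0 (- (x $ e j))"
  proof
    fix j assume j: "j \<in> {1..n}"
    have xj: "x $ e j = ysum Tp a j - ysum Tm b j"
      using xx(3) combo_comp[OF inj tp(2) tp(1) j, of a] combo_comp[OF inj tm(2) tm(1) j, of b] a(2) x2'
      by simp
    show "ysum Tp a j = max 0 (x $ e j) \<and> ysum Tm b j = max 0 (- (x $ e j))"
    proof (cases "j \<in> I")
      case True
      then have "\<forall>Y\<in>Tm. j \<notin> isupp Y" using tm(5) by blast
      then have "ysum Tm b j = 0" by (rule ysum_zero)
      then show ?thesis using xj ysum_nonneg[OF a(1), of j] by simp
    next
      case False
      then have "\<forall>X\<in>Tp. j \<notin> isupp X" using tp(5) by blast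
      then have "ysum Tp a j = 0" by (rule ysum_zero)
      then show ?thesis using xj ysum_nonneg[OF b(1), of j] by simp
    qed
  qed
  then show ?thesis using a(1) b(1) by blast
qed

lemma two_case:
  assumes bij: "bij_betw e {1..n} (UNIV :: 'n::finite set)"
  shows "measure lborel (P_two TYPE('k::field) orient n e) = real (card (tilt_two TYPE('k) orient n)) / fact n"
proof -
  note B = bij_facts[OF bij]
  let ?W = "\<lambda>TT. dimv e ` fst TT \<union> (\<lambda>Y. - dimv e Y) ` snd TT"
  have "measure lborel (\<Union>TT\<in>tilt_two TYPE('k) orient n. convex hull (insert 0 (?W TT)))
      = real (card (tilt_two TYPE('k) orient n)) / fact CARD('n)"
  proof (rule family_measure[OF tilt_finite(3)])
    fix TT assume TT: "TT \<in> tilt_two TYPE('k) orient n"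
    obtain Tp Tm where TTe: "TT = (Tp, Tm)" by (cases TT)
    obtain I where I: "I \<subseteq> {1..n}" "tilting_on TYPE('k) orient n I Tp"
      "tilting_on TYPE('k) orient n ({1..n} - I) Tm"
      using TT unfolding tilt_two_def TTe by blast
    note tp = tilting_basic[OF I(2)] and tm = tilting_basic[OF I(3)]
    define negd :: "interval \<Rightarrow> real^'n" where "negd = (\<lambda>Y. - dimv e Y)"
    have W: "?W TT = dimv e ` Tp \<union> negd ` Tm" unfolding negd_def TTe by simp
    have injd: "inj_on (dimv e) Tp" using dimv_inj[OF B(1)] tp(1) inj_on_subset by blast
    have injm: "inj_on (dimv e) Tm" using dimv_inj[OF B(1)] tm(1) inj_on_subset by blast
    have injn: "inj_on negd Tm"
    proof (rule inj_onI)
      fix Y Y' assume "Y \<in> Tm" "Y' \<in> Tm" "negd Y = negd Y'"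
      then show "Y = Y'" using inj_onD[OF injm] unfolding negd_def by simp
    qed
    have disj: "dimv e ` Tp \<inter> negd ` Tm = {}"
    proof (rule ccontr)
      assume "dimv e ` Tp \<inter> negd ` Tm \<noteq> {}"
      then obtain X Y where X: "X \<in> Tp" "Y \<in> Tm" "dimv e X = negd Y" by blast
      have "dimv e X $ e (fst X) = 1" using dimv_fst[OF B(1)] X tp(1) by blast
      moreover have "negd Y $ e (fst X) \<le> 0" unfolding negd_def using dimv_nonneg[of e Y] by simp
      ultimately show False using X(3) by simp
    qed
    have finW: "finite (?W TT)" unfolding W using tp(2) tm(2) by simp
    have "card (?W TT) = card Tp + card Tm"
      unfolding W using card_Un_disjoint[OF _ _ disj] card_image[OF injd] card_image[OF injn] tp(2) tm(2)
      by simp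
    also have "\<dots> = card I + card ({1..n} - I)" using tp(4) tm(4) by simp
    also have "\<dots> = n" using I(1) card_Diff_subset[of I "{1..n}"] finite_subset[OF I(1)]
      card_mono[OF finite_atLeastAtMost I(1)] by simp
    finally have cW: "card (?W TT) = CARD('n)" using B(3) by simp
    have ints: "\<forall>w\<in>?W TT. \<forall>i. w$i \<in> \<int>" using dimv_int by auto
    have zs: "\<forall>k. axis k 1 \<in> zc (?W TT)"
    proof
      fix k obtain j where j: "j \<in> {1..n}" "k = e j" using B(2) by blast
      show "axis k 1 \<in> zc (?W TT)"
      proof (cases "j \<in> I")
        case True
        then have "axis k 1 \<in> zc (dimv e ` Tp)" using tilting_zspan[OF I(2) I(1), of e] j by simp
        then show ?thesis using zc_mono[OF finW, of "dimv e ` Tp"] unfolding W by blast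
      next
        case False
        have sub2: "{1..n} - I \<subseteq> {1..n}" by auto
        have "axis k 1 \<in> zc (dimv e ` Tm)" using tilting_zspan[OF I(3) sub2, of e] j False by simp
        then have "axis k 1 \<in> zc (uminus ` dimv e ` Tm)" using zc_neg[of "dimv e ` Tm"] tm(2) by blast
        moreover have "uminus ` dimv e ` Tm = negd ` Tm" unfolding negd_def by (auto simp: image_comp)
        ultimately have h: "axis k 1 \<in> zc (negd ` Tm)" by simp
        have "negd ` Tm \<subseteq> ?W TT" using W by auto
        then show ?thesis using zc_mono[OF finW] h by blast
      qed
    qed
    show "finite (?W TT) \<and> card (?W TT) = CARD('n) \<and> (\<forall>w\<in>?W TT. \<forall>i. w$i \<in> \<int>) \<and> (\<forall>k. axis k 1 \<in> zc (?W TT))"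
      using finW cW ints zs by simp
  next
    fix TT TT' assume T: "TT \<in> tilt_two TYPE('k) orient n" and T': "TT' \<in> tilt_two TYPE('k) orient n"
      and ne: "Pos (?W TT) \<inter> Pos (?W TT') \<noteq> {}"
    then obtain x where x: "x \<in> Pos (?W TT)" "x \<in> Pos (?W TT')" by blast
    obtain Tp Tm where TTe: "TT = (Tp, Tm)" by (cases TT)
    obtain Tp' Tm' where TTe': "TT' = (Tp', Tm')" by (cases TT')
    have basics: "Tp \<subseteq> intervals n \<and> finite Tp \<and> crules orient Tp \<and> Tm \<subseteq> intervals n \<and> finite Tm \<and> crules orient Tm"
      if asm: "(Tp, Tm) \<in> tilt_two TYPE('k) orient n" for Tp Tm
    proof -
      obtain I where I: "tilting_on TYPE('k) orient n I Tp"
        "tilting_on TYPE('k) orient n ({1..n} - I) Tm"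
        using asm unfolding tilt_two_def by blast
      show ?thesis using tilting_basic[OF I(1)] tilting_basic[OF I(2)] by simp
    qed
    have b1: "Tp \<subseteq> intervals n" "finite Tp" "crules orient Tp" "Tm \<subseteq> intervals n" "finite Tm" "crules orient Tm"
      using basics[of Tp Tm] T TTe by auto
    have b2: "Tp' \<subseteq> intervals n" "finite Tp'" "crules orient Tp'" "Tm' \<subseteq> intervals n" "finite Tm'" "crules orient Tm'"
      using basics[of Tp' Tm'] T' TTe' by auto
    have xT: "x \<in> Pos (dimv e ` Tp \<union> (\<lambda>Y. - dimv e Y) ` Tm)" using x(1) TTe by simp
    have xT': "x \<in> Pos (dimv e ` Tp' \<union> (\<lambda>Y. - dimv e Y) ` Tm')" using x(2) TTe' by simp
    have TT1: "(Tp, Tm) \<in> tilt_two TYPE('k) orient n" using T TTe by simp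
    have TT2: "(Tp', Tm') \<in> tilt_two TYPE('k) orient n" using T' TTe' by simp
    obtain a b where ab: "\<forall>X\<in>Tp. 0 < a X" "\<forall>Y\<in>Tm. 0 < b Y"
      "\<forall>j\<in>{1..n}. ysum Tp a j = max 0 (x $ e j) \<and> ysum Tm b j = max 0 (- (x $ e j))"
      using two_y[OF B(1) TT1 xT] by blast
    obtain a' b' where ab': "\<forall>X\<in>Tp'. 0 < a' X" "\<forall>Y\<in>Tm'. 0 < b' Y"
      "\<forall>j\<in>{1..n}. ysum Tp' a' j = max 0 (x $ e j) \<and> ysum Tm' b' j = max 0 (- (x $ e j))"
      using two_y[OF B(1) TT2 xT'] by blast
    have "Tp = Tp'" using ysum_unique[OF b1(2,1,3) ab(1) b2(2,1,3) ab'(1)] ab(3) ab'(3) by simp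
    moreover have "Tm = Tm'" using ysum_unique[OF b1(5,4,6) ab(2) b2(5,4,6) ab'(2)] ab(3) ab'(3) by simp
    ultimately show "TT = TT'" using TTe TTe' by simp
  qed
  then show ?thesis unfolding P_two_def sigma_two_def B(3) .
qed

theorem theorem1p1:
  fixes orient :: "nat \<Rightarrow> bool" and n :: nat and e :: "nat \<Rightarrow> 'n::finite"
  assumes "1 \<le> n" and "bij_betw e {1..n} (UNIV :: 'n set)"
  shows "ivol n (P_plus TYPE('k::field) orient n e) = real (card (tilt_plus TYPE('k) orient n))
       \<and> ivol n (P_clus TYPE('k) orient n e) = real (card (tilt_clus TYPE('k) orient n))
       \<and> ivol n (P_two TYPE('k) orient n e) = real (card (tilt_two TYPE('k) orient n))"
  using plus_case[OF assms(2), where 'k='k and orient=orient]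
    clus_case[OF assms(2), where 'k='k and orient=orient]
    two_case[OF assms(2), where 'k='k and orient=orient]
  unfolding ivol_def by simp


end
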